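(* Let $G$ be a graph that is well-separable with respect to a set $\mathcal P$ of robust principal $(k+1)$-profiles of $G$, where $k=\kappa(\mathcal P,G)$, such that $\mathcal R(k,\mathcal P)\neq\emptyset$. Then the set $\mathcal O(\mathcal P,G)$ is nested, canonical with respect to $\mathcal P$, and nonempty.
   Context: A separation of $G$ is an ordered pair $(A,B)$ of subsets of $V(G)$ with $A\cup B=V(G)$ and no edge between $A\setminus B$ and $B\setminus A$; its order is $|A\cap B|$. $(A,B)\le(C,D)$ means $A\subseteq C$, $D\subseteq B$; separations are nested if $(A,B)$ is comparable with $(C,D)$ or $(D,C)$, and cross otherwise. A profile is a set $P$ of separations with (P1) if $(C,D)\le(A,B)\in P$ then $(D,C)\notin P$, and (P2) if $(A,B),(C,D)\in P$ then $(B\cap D,A\cup C)\notin P$. $P$ is principal if for every family $((A_i,B_i))_{i\in I}$ in $P$ with all $A_i\cap B_i$ equal, $\bigcap_i(B_i\setminus A_i)\neq\emptyset$. $P$ is an $\ell$-profile if all its separations have order $<\ell$ and for each separation $(A,B)$ of order $<\ell$, $(A,B)\in P$ or $(B,A)\in P$. $P$ is robust if for every $(A,B)\in P$ and every separation $(C,D)$ of finite order, if $(B\cap C,A\cup D)$ and $(B\cap D,A\cup C)$ both have order $<|A\cap B|$ then one of them is not in $P$. A separation distinguishes $P,P'$ if it lies in one and its reverse in the other. $\kappa(\mathcal P,G)$ is the minimum order of a separation distinguishing two profiles of $\mathcal P$; $\mathcal R(k,\mathcal P)$ is the set of separations of finite order at most $k$ distinguishing two profiles of $\mathcal P$. A separation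 $(A,B)$ is left-connected if $G[A\setminus B]$ is connected; $\mathcal R_{\rm lc}(k,\mathcal P)$ is the set of left-connected separations in $\mathcal R(k,\mathcal P)$. The crossing number of $(A,B)$ in a set $\mathcal S$ is the number of elements of $\mathcal S$ crossing $(A,B)$. $\mathcal O(\mathcal P,G)$ is the set of separations in $\mathcal R_{\rm lc}(k,\mathcal P)$, $k=\kappa(\mathcal P,G)$, whose crossing number in $\mathcal R_{\rm lc}(k,\mathcal P)$ is minimum. A component $C$ of $G-(A\cap B)$ is degenerated if $N(C)\subsetneq A\cap B$; $G$ is well-separable w.r.t. $\mathcal P$ if no separation $(A,B)\in\mathcal R(\kappa(\mathcal P,G),\mathcal P)$ has a degenerated component of $G-(A\cap B)$. A set of separations constructed from $(G,\mathcal P)$ is canonical with respect to $\mathcal P$ if the construction commutes with isomorphisms: whenever $\varphi:G\to G'$ is an isomorphism mapping $\mathcal P$ to $\mathcal P'$, $\varphi$ maps the set constructed for $(G,\mathcal P)$ onto the set constructed for $(G',\mathcal P')$. *)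

theory Defs
  imports Main "HOL-Library.Extended_Nat"
begin

definition graph :: "'a set \<Rightarrow> ('a \<Rightarrow> 'a \<Rightarrow> bool) \<Rightarrow> bool" where
  "graph V E \<longleftrightarrow> (\<forall>x y. E x y \<longrightarrow> x \<in> V \<and> y \<in> V) \<and> (\<forall>x y. E x y \<longrightarrow> E y x) \<and> (\<forall>x. \<not> E x x)"

type_synonym 'a sep = "'a set \<times> 'a set"

definition is_sep :: "'a set \<Rightarrow> ('a \<Rightarrow> 'a \<Rightarrow> bool) \<Rightarrow> 'a sep \<Rightarrow> bool" where
  "is_sep V E s \<longleftrightarrow> fst s \<union> snd s = V \<and>
     \<not> (\<exists>x \<in> fst s - snd s. \<exists>y \<in> snd s - fst s. E x y)"

definition sep_ord :: "'a sep \<Rightarrow> enat" where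
  "sep_ord s = (if finite (fst s \<inter> snd s) then enat (card (fst s \<inter> snd s)) else \<infinity>)"

definition rev_sep :: "'a sep \<Rightarrow> 'a sep" where
  "rev_sep s = (snd s, fst s)"

definition sep_le :: "'a sep \<Rightarrow> 'a sep \<Rightarrow> bool" where
  "sep_le s t \<longleftrightarrow> fst s \<subseteq> fst t \<and> snd t \<subseteq> snd s"

definition nested :: "'a sep \<Rightarrow> 'a sep \<Rightarrow> bool" where
  "nested s t \<longleftrightarrow> sep_le s t \<or> sep_le t s \<or> sep_le s (rev_sep t) \<or> sep_le (rev_sep t) s"

definition crosses :: "'a sep \<Rightarrow> 'a sep \<Rightarrow> bool" where
  "crosses s t \<longleftrightarrow> \<not> nested s t"

definition nested_set :: "'a sep set \<Rightarrow> bool" where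
  "nested_set S \<longleftrightarrow> (\<forall>s \<in> S. \<forall>t \<in> S. nested s t)"

definition is_profile :: "'a set \<Rightarrow> ('a \<Rightarrow> 'a \<Rightarrow> bool) \<Rightarrow> 'a sep set \<Rightarrow> bool" where
  "is_profile V E P \<longleftrightarrow> (\<forall>s \<in> P. is_sep V E s) \<and>
     (\<forall>A B C D. (A, B) \<in> P \<and> sep_le (C, D) (A, B) \<longrightarrow> (D, C) \<notin> P) \<and>
     (\<forall>A B C D. (A, B) \<in> P \<and> (C, D) \<in> P \<longrightarrow> (B \<inter> D, A \<union> C) \<notin> P)"

definition principal_profile :: "'a sep set \<Rightarrow> bool" where
  "principal_profile P \<longleftrightarrow> (\<forall>S X. S \<subseteq> P \<and> S \<noteq> {} \<and> (\<forall>s \<in> S. fst s \<inter> snd s = X) \<longrightarrow>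
       (\<Inter>s \<in> S. snd s - fst s) \<noteq> {})"

definition l_profile :: "'a set \<Rightarrow> ('a \<Rightarrow> 'a \<Rightarrow> bool) \<Rightarrow> nat \<Rightarrow> 'a sep set \<Rightarrow> bool" where
  "l_profile V E l P \<longleftrightarrow> is_profile V E P \<and> (\<forall>s \<in> P. sep_ord s < enat l) \<and>
     (\<forall>s. is_sep V E s \<and> sep_ord s < enat l \<longrightarrow> s \<in> P \<or> rev_sep s \<in> P)"

definition robust :: "'a set \<Rightarrow> ('a \<Rightarrow> 'a \<Rightarrow> bool) \<Rightarrow> 'a sep set \<Rightarrow> bool" where
  "robust V E P \<longleftrightarrow> (\<forall>A B C D. (A, B) \<in> P \<and> is_sep V E (C, D) \<and> sep_ord (C, D) < \<infinity> \<and>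
       sep_ord (B \<inter> C, A \<union> D) < sep_ord (A, B) \<and> sep_ord (B \<inter> D, A \<union> C) < sep_ord (A, B) \<longrightarrow>
       (B \<inter> C, A \<union> D) \<notin> P \<or> (B \<inter> D, A \<union> C) \<notin> P)"

definition distinguishes :: "'a sep \<Rightarrow> 'a sep set \<Rightarrow> 'a sep set \<Rightarrow> bool" where
  "distinguishes s P P' \<longleftrightarrow> (s \<in> P \<and> rev_sep s \<in> P') \<or> (rev_sep s \<in> P \<and> s \<in> P')"

definition distinguishes_some :: "'a sep set set \<Rightarrow> 'a sep \<Rightarrow> bool" where
  "distinguishes_some \<P> s \<longleftrightarrow> (\<exists>P \<in> \<P>. \<exists>P' \<in> \<P>. distinguishes s P P')"

definition kappa :: "'a set \<Rightarrow> ('a \<Rightarrow> 'a \<Rightarrow> bool) \<Rightarrow> 'a sep set set \<Rightarrow> enat" where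
  "kappa V E \<P> = Inf (sep_ord ` {s. is_sep V E s \<and> distinguishes_some \<P> s})"

definition R :: "'a set \<Rightarrow> ('a \<Rightarrow> 'a \<Rightarrow> bool) \<Rightarrow> enat \<Rightarrow> 'a sep set set \<Rightarrow> 'a sep set" where
  "R V E k \<P> = {s. is_sep V E s \<and> sep_ord s < \<infinity> \<and> sep_ord s \<le> k \<and> distinguishes_some \<P> s}"

definition connected_in :: "('a \<Rightarrow> 'a \<Rightarrow> bool) \<Rightarrow> 'a set \<Rightarrow> bool" where
  "connected_in E S \<longleftrightarrow> S \<noteq> {} \<and>
     (\<forall>x \<in> S. \<forall>y \<in> S. (\<lambda>u v. u \<in> S \<and> v \<in> S \<and> E u v)\<^sup>*\<^sup>* x y)"

definition left_connected :: "('a \<Rightarrow> 'a \<Rightarrow> bool) \<Rightarrow> 'a sep \<Rightarrow> bool" where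
  "left_connected E s \<longleftrightarrow> connected_in E (fst s - snd s)"

definition R_lc :: "'a set \<Rightarrow> ('a \<Rightarrow> 'a \<Rightarrow> bool) \<Rightarrow> enat \<Rightarrow> 'a sep set set \<Rightarrow> 'a sep set" where
  "R_lc V E k \<P> = {s \<in> R V E k \<P>. left_connected E s}"

(* the set of elements of S crossing s; its cardinality is the crossing number *)
definition crossing_set :: "'a sep set \<Rightarrow> 'a sep \<Rightarrow> 'a sep set" where
  "crossing_set S s = {t \<in> S. crosses t s}"

definition card_le :: "'b set \<Rightarrow> 'c set \<Rightarrow> bool" where
  "card_le X Y \<longleftrightarrow> (\<exists>f. inj_on f X \<and> f ` X \<subseteq> Y)"

definition O_set :: "'a set \<Rightarrow> ('a \<Rightarrow> 'a \<Rightarrow> bool) \<Rightarrow> 'a sep set set \<Rightarrow> 'a sep set" where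
  "O_set V E \<P> = (let S = R_lc V E (kappa V E \<P>) \<P> in
     {s \<in> S. \<forall>t \<in> S. card_le (crossing_set S s) (crossing_set S t)})"

definition component_of :: "'a set \<Rightarrow> ('a \<Rightarrow> 'a \<Rightarrow> bool) \<Rightarrow> 'a set \<Rightarrow> 'a set \<Rightarrow> bool" where
  "component_of V E X C \<longleftrightarrow> C \<subseteq> V - X \<and> connected_in E C \<and>
     (\<forall>x \<in> C. \<forall>y \<in> V - X. E x y \<longrightarrow> y \<in> C)"

definition nbhd :: "'a set \<Rightarrow> ('a \<Rightarrow> 'a \<Rightarrow> bool) \<Rightarrow> 'a set \<Rightarrow> 'a set" where
  "nbhd V E C = {y \<in> V - C. \<exists>x \<in> C. E x y}"

definition well_separable :: "'a set \<Rightarrow> ('a \<Rightarrow> 'a \<Rightarrow> bool) \<Rightarrow> 'a sep set set \<Rightarrow> bool" where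
  "well_separable V E \<P> \<longleftrightarrow> \<not> (\<exists>s \<in> R V E (kappa V E \<P>) \<P>. \<exists>C.
     component_of V E (fst s \<inter> snd s) C \<and> nbhd V E C \<subset> fst s \<inter> snd s)"

definition map_sep :: "('a \<Rightarrow> 'b) \<Rightarrow> 'a sep \<Rightarrow> 'b sep" where
  "map_sep f s = (f ` fst s, f ` snd s)"

definition graph_iso :: "('a \<Rightarrow> 'b) \<Rightarrow> 'a set \<Rightarrow> ('a \<Rightarrow> 'a \<Rightarrow> bool) \<Rightarrow> 'b set \<Rightarrow> ('b \<Rightarrow> 'b \<Rightarrow> bool) \<Rightarrow> bool" where
  "graph_iso f V E V' E' \<longleftrightarrow> bij_betw f V V' \<and> (\<forall>x \<in> V. \<forall>y \<in> V. E x y \<longleftrightarrow> E' (f x) (f y))"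

end

theory Submission
  imports Defs
begin


definition reach :: "'a set \<Rightarrow> ('a \<Rightarrow> 'a \<Rightarrow> bool) \<Rightarrow> 'a \<Rightarrow> 'a \<Rightarrow> bool" where
  "reach U E = (\<lambda>u v. u \<in> U \<and> v \<in> U \<and> E u v)\<^sup>*\<^sup>*"

definition cmp :: "'a set \<Rightarrow> ('a \<Rightarrow> 'a \<Rightarrow> bool) \<Rightarrow> 'a \<Rightarrow> 'a set" where
  "cmp U E x = {y. reach U E x y}"

lemma reach_refl[simp]: "reach U E x x"
  by (simp add: reach_def)

lemma reach_mono: "U \<subseteq> U' \<Longrightarrow> reach U E x y \<Longrightarrow> reach U' E x y"
  unfolding reach_def by (erule rtranclp_mono[THEN predicate2D, rotated]) auto

lemma reach_in: "reach U E x y \<Longrightarrow> x \<in> U \<Longrightarrow> y \<in> U"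
  unfolding reach_def by (induction rule: rtranclp_induct) auto

lemma reach_step: "reach U E x y \<Longrightarrow> y \<in> U \<Longrightarrow> z \<in> U \<Longrightarrow> E y z \<Longrightarrow> reach U E x z"
  unfolding reach_def by (simp add: rtranclp.rtrancl_into_rtrancl)

lemma reach_trans: "reach U E x y \<Longrightarrow> reach U E y z \<Longrightarrow> reach U E x z"
  unfolding reach_def by simp

lemma reach_sym: assumes "\<forall>x y. E x y \<longrightarrow> E y x" and "reach U E x y" shows "reach U E y x"
  using assms(2) unfolding reach_def
proof (induction rule: rtranclp_induct)
  case base then show ?case by simp
next
  case (step y z)
  then have "(\<lambda>u v. u \<in> U \<and> v \<in> U \<and> E u v) z y" using assms(1) by auto
  then show ?case by (rule converse_rtranclp_into_rtranclp[OF _ step.IH])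
qed

lemma reach_comp: assumes "reach U E x y" shows "reach (cmp U E x) E x y"
proof -
  have "(\<lambda>u v. u\<in>U \<and> v\<in>U \<and> E u v)\<^sup>*\<^sup>* x y" using assms by (simp add: reach_def)
  then show ?thesis
  proof (induction rule: rtranclp_induct)
    case base show ?case by simp
  next
    case (step y z)
    have yc: "y \<in> cmp U E x" using step(1) by (simp add: cmp_def reach_def)
    have zc: "z \<in> cmp U E x" using step(1,2) by (simp add: cmp_def reach_def rtranclp.rtrancl_into_rtrancl)
    show ?case using step(3) yc zc step(2) reach_step by fast
  qed
qed

lemma graph_sym: "graph V E \<Longrightarrow> \<forall>x y. E x y \<longrightarrow> E y x"
  by (simp add: graph_def)

lemma connected_in_reach: "connected_in E S \<longleftrightarrow> S \<noteq> {} \<and> (\<forall>x\<in>S. \<forall>y\<in>S. reach S E x y)"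
  by (simp add: connected_in_def reach_def)

lemma comp_component:
  assumes G: "graph V E" and x: "x \<in> V - X"
  shows "component_of V E X (cmp (V - X) E x)"
proof -
  have sub: "cmp (V - X) E x \<subseteq> V - X" using x reach_in[of "V - X" E x] by (auto simp: cmp_def)
  have conn: "connected_in E (cmp (V - X) E x)"
    unfolding connected_in_reach
  proof (intro conjI ballI)
    have "x \<in> cmp (V - X) E x" by (simp add: cmp_def)
    then show "cmp (V - X) E x \<noteq> {}" by blast
  next
    fix a b assume a: "a \<in> cmp (V - X) E x" and b: "b \<in> cmp (V - X) E x"
    have "reach (cmp (V - X) E x) E x a" "reach (cmp (V - X) E x) E x b"
      using a b reach_comp by (auto simp: cmp_def)
    then show "reach (cmp (V - X) E x) E a b"
      using reach_sym[OF graph_sym[OF G]] reach_trans by metis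
  qed
  have cl: "\<forall>a \<in> cmp (V - X) E x. \<forall>b \<in> V - X. E a b \<longrightarrow> b \<in> cmp (V - X) E x"
    using sub by (auto simp: cmp_def intro: reach_step)
  show ?thesis using sub conn cl by (simp add: component_of_def)
qed

lemma connected_sub_comp:
  assumes "connected_in E N" "N \<subseteq> U" "n \<in> N"
  shows "N \<subseteq> cmp U E n"
  using assms by (auto simp: connected_in_reach cmp_def intro: reach_mono)

lemma component_eq:
  assumes G: "graph V E" and C: "component_of V E X C" and x: "x \<in> C"
  shows "C = cmp (V - X) E x"
proof
  show "C \<subseteq> cmp (V - X) E x"
    using C x connected_sub_comp[of E C "V - X" x] by (auto simp: component_of_def)
next
  show "cmp (V - X) E x \<subseteq> C"
  proof
    fix y assume "y \<in> cmp (V - X) E x"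
    then have "reach (V - X) E x y" by (simp add: cmp_def)
    then show "y \<in> C" unfolding reach_def
      by (induction rule: rtranclp_induct) (use x C in \<open>auto simp: component_of_def\<close>)
  qed
qed

lemma nbhd_sub:
  assumes G: "graph V E" and C: "component_of V E X C"
  shows "nbhd V E C \<subseteq> X"
  using C by (auto simp: nbhd_def component_of_def)


lemma sep_ord_fin: "finite (fst s \<inter> snd s) \<Longrightarrow> sep_ord s = enat (card (fst s \<inter> snd s))"
  by (simp add: sep_ord_def)

lemma sep_ord_lt: "sep_ord s < enat n \<Longrightarrow> finite (fst s \<inter> snd s) \<and> card (fst s \<inter> snd s) < n"
  by (simp add: sep_ord_def split: if_splits)

lemma is_sep_sub: "is_sep V E s \<Longrightarrow> fst s \<subseteq> V \<and> snd s \<subseteq> V"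
  by (auto simp: is_sep_def)

lemma comp_sep:
  assumes G: "graph V E" and M: "component_of V E Z M" and Z: "Z \<subseteq> V"
  shows "is_sep V E (M \<union> Z, V - M)" "(M \<union> Z) \<inter> (V - M) = Z"
  using M Z G unfolding is_sep_def component_of_def graph_def by auto

lemma lc_comp:
  assumes G: "graph V E" and t: "is_sep V E t" and lc: "left_connected E t"
  shows "component_of V E (fst t \<inter> snd t) (fst t - snd t)"
  unfolding component_of_def
proof (intro conjI)
  show "fst t - snd t \<subseteq> V - fst t \<inter> snd t" using t by (auto simp: is_sep_def)
  show "connected_in E (fst t - snd t)" using lc by (simp add: left_connected_def)
  show "\<forall>x\<in>fst t - snd t. \<forall>y\<in>V - fst t \<inter> snd t. E x y \<longrightarrow> y \<in> fst t - snd t"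
    using t by (auto simp: is_sep_def)
qed

locale setting =
  fixes V :: "'a set" and E :: "'a \<Rightarrow> 'a \<Rightarrow> bool"
    and PP :: "'a sep set set" and k :: nat
  assumes G: "graph V E"
    and kappa: "kappa V E PP = enat k"
    and profs: "\<forall>P \<in> PP. l_profile V E (k + 1) P \<and> robust V E P \<and> principal_profile P"
    and ws: "well_separable V E PP"
begin

abbreviation "RR \<equiv> R V E (enat k) PP"
abbreviation "SS \<equiv> R_lc V E (enat k) PP"

lemma Esym: "E x y \<Longrightarrow> E y x" using G by (simp add: graph_def)
lemma Ein: "E x y \<Longrightarrow> x \<in> V \<and> y \<in> V" using G by (simp add: graph_def)

lemma orient: "Q \<in> PP \<Longrightarrow> is_sep V E s \<Longrightarrow> sep_ord s < enat (k+1) \<Longrightarrow> s \<in> Q \<or> rev_sep s \<in> Q"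
  using profs unfolding l_profile_def by (metis prod.collapse)

lemma orient': "Q \<in> PP \<Longrightarrow> is_sep V E s \<Longrightarrow> finite (fst s \<inter> snd s) \<Longrightarrow> card (fst s \<inter> snd s) \<le> k
   \<Longrightarrow> s \<in> Q \<or> rev_sep s \<in> Q"
  by (rule orient) (auto simp: sep_ord_fin)

lemma p1: assumes "Q \<in> PP" "x \<in> Q" "sep_le y x" shows "rev_sep y \<notin> Q"
proof -
  have "is_profile V E Q" using profs assms(1) by (simp add: l_profile_def)
  then show ?thesis using assms(2,3) unfolding is_profile_def rev_sep_def
    by (metis prod.collapse)
qed

lemma p2: assumes "Q \<in> PP" "x \<in> Q" "y \<in> Q" shows "(snd x \<inter> snd y, fst x \<union> fst y) \<notin> Q"
proof -
  have "is_profile V E Q" using profs assms(1) by (simp add: l_profile_def)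
  then show ?thesis using assms(2,3) unfolding is_profile_def
    by (metis prod.collapse)
qed

lemma inQ: assumes "Q \<in> PP" "x \<in> Q" shows "is_sep V E x" "sep_ord x < enat (k+1)"
  using profs assms by (auto simp: l_profile_def is_profile_def)

lemma rt_ne: assumes "Q \<in> PP" "x \<in> Q" shows "snd x - fst x \<noteq> {}"
proof -
  have "principal_profile Q" using profs assms(1) by simp
  then show ?thesis unfolding principal_profile_def
    by (erule_tac x="{x}" in allE, erule_tac x="fst x \<inter> snd x" in allE) (use assms in simp)
qed

lemma rev_ne: "x \<in> Q \<Longrightarrow> rev_sep x \<in> Q' \<Longrightarrow> Q \<in> PP \<Longrightarrow> Q' \<in> PP \<Longrightarrow> fst x - snd x \<noteq> {}"
  using rt_ne[of Q' "rev_sep x"] by (simp add: rev_sep_def)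

lemma kappa_le: "is_sep V E s \<Longrightarrow> distinguishes_some PP s \<Longrightarrow> enat k \<le> sep_ord s"
  using kappa unfolding kappa_def by (metis (mono_tags, lifting) INF_lower mem_Collect_eq)

lemma R_ord: assumes "s \<in> RR" shows "finite (fst s \<inter> snd s)" "card (fst s \<inter> snd s) = k"
proof -
  have s: "is_sep V E s" "sep_ord s < \<infinity>" "sep_ord s \<le> enat k" "distinguishes_some PP s"
    using assms by (auto simp: R_def)
  show f: "finite (fst s \<inter> snd s)" using s(2) by (simp add: sep_ord_def split: if_splits)
  show "card (fst s \<inter> snd s) = k" using s(3) kappa_le[OF s(1,4)] by (simp add: sep_ord_fin[OF f])
qed

lemma R_intro:
  assumes "is_sep V E s" "finite (fst s \<inter> snd s)" "card (fst s \<inter> snd s) \<le> k"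
    "P \<in> PP" "P' \<in> PP" "s \<in> P" "rev_sep s \<in> P'"
  shows "s \<in> RR"
  using assms unfolding R_def distinguishes_some_def distinguishes_def
  by (auto simp: sep_ord_fin)

lemma R_dist: assumes "s \<in> RR" obtains P P' where "P \<in> PP" "P' \<in> PP" "s \<in> P" "rev_sep s \<in> P'"
  using assms unfolding R_def distinguishes_some_def distinguishes_def by auto

lemma R_sep: "s \<in> RR \<Longrightarrow> is_sep V E s" by (simp add: R_def)

lemma tight: assumes "s \<in> RR" "component_of V E (fst s \<inter> snd s) C"
  shows "nbhd V E C = fst s \<inter> snd s"
proof -
  have "nbhd V E C \<subseteq> fst s \<inter> snd s" using nbhd_sub[OF G assms(2)] .
  moreover have "\<not> nbhd V E C \<subset> fst s \<inter> snd s" using ws assms unfolding well_separable_def kappa by blast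
  ultimately show ?thesis by blast
qed

lemma tight_adj: assumes "s \<in> RR" "component_of V E (fst s \<inter> snd s) C" "w \<in> fst s \<inter> snd s"
  shows "\<exists>c\<in>C. E c w"
  using tight[OF assms(1,2)] assms(3) by (auto simp: nbhd_def)

lemma princ_comp:
  assumes Q: "Q \<in> PP" and u: "u \<in> Q"
  obtains M where "component_of V E (fst u \<inter> snd u) M" "M \<subseteq> snd u - fst u"
    "(V - M, M \<union> (fst u \<inter> snd u)) \<in> Q"
proof -
  define Z where "Z = fst u \<inter> snd u"
  have useps: "is_sep V E u" "sep_ord u < enat (k+1)" using inQ[OF Q u] by auto
  have ZV: "Z \<subseteq> V" using useps(1) by (auto simp: Z_def is_sep_def)
  have Zf: "finite Z" "card Z < k+1" using sep_ord_lt[OF useps(2)] by (auto simp: Z_def)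
  define F where "F = insert u {s \<in> Q. \<exists>M. component_of V E Z M \<and> s = (M \<union> Z, V - M)}"
  have "principal_profile Q" using profs Q by simp
  moreover have "F \<subseteq> Q" using u by (auto simp: F_def)
  moreover have "F \<noteq> {}" by (simp add: F_def)
  moreover have "\<forall>s\<in>F. fst s \<inter> snd s = Z"
  proof
    fix s assume "s \<in> F"
    then consider "s = u" | M where "component_of V E Z M" "s = (M \<union> Z, V - M)" by (auto simp: F_def)
    then show "fst s \<inter> snd s = Z"
    proof cases
      case 1 then show ?thesis by (simp add: Z_def)
    next
      case 2 then show ?thesis using comp_sep(2)[OF G 2(1) ZV] by simp
    qed
  qed
  ultimately have "(\<Inter>s \<in> F. snd s - fst s) \<noteq> {}"
    unfolding principal_profile_def by blast
  then obtain v where v: "\<forall>s\<in>F. v \<in> snd s - fst s" by blast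
  have vu: "v \<in> snd u - fst u" using v by (simp add: F_def)
  then have vV: "v \<in> V - Z" using useps(1) by (auto simp: Z_def is_sep_def)
  define M where "M = cmp (V - Z) E v"
  have M: "component_of V E Z M" using comp_component[OF G vV] by (simp add: M_def)
  have vM: "v \<in> M" by (simp add: M_def cmp_def)
  have sepM: "is_sep V E (M \<union> Z, V - M)" and spM: "(M \<union> Z) \<inter> (V - M) = Z"
    using comp_sep[OF G M ZV] by auto
  have "(M \<union> Z, V - M) \<notin> Q"
  proof
    assume "(M \<union> Z, V - M) \<in> Q"
    then have "(M \<union> Z, V - M) \<in> F" using M by (auto simp: F_def)
    then show False using v vM by fastforce
  qed
  moreover have "(M \<union> Z, V - M) \<in> Q \<or> rev_sep (M \<union> Z, V - M) \<in> Q"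
    using orient'[OF Q sepM] spM Zf by simp
  ultimately have inQ: "(V - M, M \<union> Z) \<in> Q" by (simp add: rev_sep_def)
  have "M \<subseteq> snd u - fst u"
  proof
    fix y assume "y \<in> M"
    then have "reach (V - Z) E v y" by (simp add: M_def cmp_def)
    then show "y \<in> snd u - fst u" unfolding reach_def
    proof (induction rule: rtranclp_induct)
      case base then show ?case using vu .
    next
      case (step y z)
      have zz: "z \<in> V" "z \<notin> Z" "E y z" using step(2) by auto
      have "\<not> (z \<in> fst u - snd u)" using useps(1) Esym[OF zz(3)] step.IH unfolding is_sep_def by blast
      then show ?case using zz useps(1) unfolding is_sep_def Z_def by blast
    qed
  qed
  then show ?thesis using that M inQ by (simp add: Z_def)
qed

end


definition tsep :: "'a set \<Rightarrow> ('a \<Rightarrow> 'a \<Rightarrow> bool) \<Rightarrow> 'a \<Rightarrow> 'a \<Rightarrow> 'a set \<Rightarrow> bool" where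
  "tsep U E u v W \<longleftrightarrow> W \<subseteq> U \<and> u \<in> U - W \<and> v \<in> U - W \<and> \<not> reach (U - W) E u v \<and>
     (\<forall>w\<in>W. (\<exists>x. reach (U - W) E u x \<and> E x w) \<and> (\<exists>y. reach (U - W) E v y \<and> E y w))"

lemma walk_finite:
  assumes "reach U E a b" "a \<in> U"
  shows "\<exists>F. finite F \<and> F \<subseteq> U \<and> a \<in> F \<and> reach F E a b"
proof -
  have "(\<lambda>u v. u \<in> U \<and> v \<in> U \<and> E u v)\<^sup>*\<^sup>* a b" using assms(1) by (simp add: reach_def)
  then show ?thesis
  proof (induction rule: rtranclp_induct)
    case base then show ?case using assms(2) by (intro exI[of _ "{a}"]) simp
  next
    case (step y z)
    then obtain F where F: "finite F" "F \<subseteq> U" "a \<in> F" "reach F E a y" by blast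
    have yF: "y \<in> F" using reach_in[OF F(4) F(3)] .
    have "reach (insert z F) E a y" using F(4) reach_mono[of F "insert z F"] by blast
    then have "reach (insert z F) E a z" using yF step(2) reach_step by fastforce
    then show ?case using F step(2) by (intro exI[of _ "insert z F"]) auto
  qed
qed

lemma tw_finite:
  assumes sym: "\<forall>x y. E x y \<longrightarrow> E y x"
  shows "finite {W. tsep U E u v W \<and> finite W \<and> card W = n}"
proof (induction n arbitrary: U)
  case 0
  have "{W. tsep U E u v W \<and> finite W \<and> card W = 0} \<subseteq> {{}}" by auto
  then show ?case by (rule finite_subset) simp
next
  case (Suc n)
  show ?case
  proof (cases "{W. tsep U E u v W \<and> finite W \<and> card W = Suc n} = {}")
    case True then show ?thesis by (metis finite.emptyI)
  next
    case False
    then obtain W0 where W0: "tsep U E u v W0" "finite W0" "card W0 = Suc n" by auto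
    then obtain w0 where w0: "w0 \<in> W0" by (metis card.empty ex_in_conv nat.distinct(1))
    from W0(1) w0 obtain x y where xy: "reach (U - W0) E u x" "E x w0" "reach (U - W0) E v y" "E y w0"
      unfolding tsep_def by blast
    have uU: "u \<in> U" "v \<in> U" "w0 \<in> U" using W0(1) w0 by (auto simp: tsep_def)
    have r1: "reach U E u x" using xy(1) reach_mono[of "U - W0" U] by blast
    have r2: "reach U E v y" using xy(3) reach_mono[of "U - W0" U] by blast
    have xU: "x \<in> U" using reach_in[OF r1 uU(1)] .
    have yU: "y \<in> U" using reach_in[OF r2 uU(2)] .
    have "reach U E u w0" using reach_step[OF r1 xU uU(3) xy(2)] .
    moreover have ew: "E w0 y" using sym xy(4) by blast
    ultimately have ruy: "reach U E u y" using reach_step[OF _ uU(3) yU] by blast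
    have ruv: "reach U E u v" using reach_trans[OF ruy reach_sym[OF sym r2]] .
    obtain F where F: "finite F" "F \<subseteq> U" "reach F E u v" using walk_finite[OF ruv uU(1)] by blast
    have "{W. tsep U E u v W \<and> finite W \<and> card W = Suc n} \<subseteq>
        (\<Union>w\<in>F. insert w ` {W'. tsep (U - {w}) E u v W' \<and> finite W' \<and> card W' = n})"
    proof
      fix W assume W: "W \<in> {W. tsep U E u v W \<and> finite W \<and> card W = Suc n}"
      have "W \<inter> F \<noteq> {}"
      proof
        assume "W \<inter> F = {}"
        then have "F \<subseteq> U - W" using F(2) by blast
        then have "reach (U - W) E u v" using reach_mono[OF _ F(3)] by blast
        then show False using W by (simp add: tsep_def)
      qed
      then obtain w where w: "w \<in> W" "w \<in> F" by blast
      have eq: "(U - {w}) - (W - {w}) = U - W" using w by auto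
      have "tsep (U - {w}) E u v (W - {w})"
        using W w unfolding tsep_def eq by auto
      moreover have "finite (W - {w})" "card (W - {w}) = n" using W w by auto
      moreover have "W = insert w (W - {w})" using w by auto
      ultimately show "W \<in> (\<Union>w\<in>F. insert w ` {W'. tsep (U - {w}) E u v W' \<and> finite W' \<and> card W' = n})"
        using w by blast
    qed
    moreover have "finite (\<Union>w\<in>F. insert w ` {W'. tsep (U - {w}) E u v W' \<and> finite W' \<and> card W' = n})"
      by (intro finite_UN_I F(1) finite_imageI Suc.IH)
    ultimately show ?thesis by (rule finite_subset)
  qed
qed

lemma sep_form: "is_sep V E r \<Longrightarrow> r = ((fst r - snd r) \<union> (fst r \<inter> snd r), V - (fst r - snd r))"
  unfolding is_sep_def by (cases r) auto

context setting begin

lemma side: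
  assumes K: "component_of V E X K" and XV: "X \<subseteq> V"
    and Qc: "connected_in E Qc" "Qc \<subseteq> V - X"
    and WV: "W \<subseteq> V" and adj: "\<forall>w\<in>W. \<exists>c\<in>Qc. E c w"
  shows "(Qc \<subseteq> K \<and> W \<subseteq> K \<union> X) \<or> (Qc \<inter> K = {} \<and> W \<inter> K = {})"
proof -
  obtain q where q: "q \<in> Qc" using Qc(1) by (auto simp: connected_in_def)
  have Qsub: "Qc \<subseteq> cmp (V - X) E q" using connected_sub_comp[OF Qc q] .
  have Kcl: "\<forall>x\<in>K. \<forall>y\<in>V - X. E x y \<longrightarrow> y \<in> K" using K by (simp add: component_of_def)
  show ?thesis
  proof (cases "q \<in> K")
    case True
    then have "K = cmp (V - X) E q" using component_eq[OF G K] by blast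
    then have QK: "Qc \<subseteq> K" using Qsub by simp
    have "W \<subseteq> K \<union> X"
    proof
      fix w assume "w \<in> W"
      then obtain c where "c \<in> Qc" "E c w" using adj by blast
      then show "w \<in> K \<union> X" using QK Kcl WV \<open>w \<in> W\<close> by blast
    qed
    then show ?thesis using QK by blast
  next
    case False
    have QK: "Qc \<inter> K = {}"
    proof (rule ccontr)
      assume "Qc \<inter> K \<noteq> {}"
      then obtain m where m: "m \<in> Qc" "m \<in> K" by blast
      then have "K = cmp (V - X) E m" using component_eq[OF G K] by blast
      moreover have "Qc \<subseteq> cmp (V - X) E m" using connected_sub_comp[OF Qc m(1)] .
      ultimately show False using q False by blast
    qed
    have "W \<inter> K = {}"
    proof (rule ccontr)
      assume "W \<inter> K \<noteq> {}"
      then obtain w where w: "w \<in> W" "w \<in> K" by blast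
      then obtain c where c: "c \<in> Qc" "E c w" using adj by blast
      have "c \<in> K" using Kcl w(2) Esym[OF c(2)] c(1) Qc(2) by blast
      then show False using QK c(1) by blast
    qed
    then show ?thesis using QK by blast
  qed
qed

lemma nest_avoid:
  assumes K: "component_of V E X K" and XV: "X \<subseteq> V"
    and N: "component_of V E W N" and WV: "W \<subseteq> V" and adj: "\<forall>w\<in>W. \<exists>c\<in>N. E c w"
    and NX: "N \<inter> X = {}"
  shows "nested (N \<union> W, V - N) (K \<union> X, V - K)"
proof -
  have Nc: "connected_in E N" "N \<subseteq> V - X" using N NX by (auto simp: component_of_def)
  have NV: "N \<subseteq> V" using N by (auto simp: component_of_def)
  have KV: "K \<subseteq> V" using K by (auto simp: component_of_def)
  from side[OF K XV Nc WV adj] show ?thesis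
  proof
    assume "N \<subseteq> K \<and> W \<subseteq> K \<union> X"
    then have "sep_le (N \<union> W, V - N) (K \<union> X, V - K)" by (auto simp: sep_le_def)
    then show ?thesis by (simp add: nested_def)
  next
    assume a: "N \<inter> K = {} \<and> W \<inter> K = {}"
    then have "sep_le (N \<union> W, V - N) (rev_sep (K \<union> X, V - K))"
      using NV WV KV XV NX by (auto simp: sep_le_def rev_sep_def)
    then show ?thesis by (simp add: nested_def)
  qed
qed

lemma SS_R: "t \<in> SS \<Longrightarrow> t \<in> RR" by (simp add: R_lc_def)

lemma SS_comp: "t \<in> SS \<Longrightarrow> component_of V E (fst t \<inter> snd t) (fst t - snd t)"
  using lc_comp[OF G] by (simp add: R_lc_def R_def)

lemma cross_struct:
  assumes r: "r \<in> SS" and t: "t \<in> SS" and cr: "crosses t r"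
  shows "\<exists>x1\<in>fst r \<inter> snd r. \<exists>x2\<in>fst r \<inter> snd r. tsep V E x1 x2 (fst t \<inter> snd t) \<and>
    finite (fst t \<inter> snd t) \<and> card (fst t \<inter> snd t) = k \<and>
    t = (cmp (V - (fst t \<inter> snd t)) E x1 \<union> (fst t \<inter> snd t), V - cmp (V - (fst t \<inter> snd t)) E x1)"
proof -
  define X where "X = fst r \<inter> snd r"
  define K where "K = fst r - snd r"
  define W where "W = fst t \<inter> snd t"
  define N where "N = fst t - snd t"
  have rR: "r \<in> RR" and tR: "t \<in> RR" using r t SS_R by auto
  have rs: "is_sep V E r" and ts: "is_sep V E t" using rR tR R_sep by auto
  have req: "r = (K \<union> X, V - K)" using sep_form[OF rs] by (simp add: K_def X_def)
  have teq: "t = (N \<union> W, V - N)" using sep_form[OF ts] by (simp add: N_def W_def)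
  have K: "component_of V E X K" using SS_comp[OF r] by (simp add: K_def X_def)
  have N: "component_of V E W N" using SS_comp[OF t] by (simp add: N_def W_def)
  have XV: "X \<subseteq> V" and WV: "W \<subseteq> V" and NV: "N \<subseteq> V" and KV: "K \<subseteq> V"
    using rs ts by (auto simp: X_def W_def N_def K_def is_sep_def)
  have Xf: "finite X" "card X = k" using R_ord[OF rR] by (auto simp: X_def)
  have Wf: "finite W" "card W = k" using R_ord[OF tR] by (auto simp: W_def)
  have tightW: "\<And>C. component_of V E W C \<Longrightarrow> \<forall>w\<in>W. \<exists>c\<in>C. E c w"
    using tight_adj[OF tR] by (simp add: W_def)
  have adjN: "\<forall>w\<in>W. \<exists>c\<in>N. E c w" using tightW[OF N] .
  have nn: "\<not> nested (N \<union> W, V - N) (K \<union> X, V - K)" using cr req teq by (simp add: crosses_def)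
  have NX: "N \<inter> X \<noteq> {}" using nest_avoid[OF K XV N WV adjN] nn by blast
  then obtain x1 where x1: "x1 \<in> N" "x1 \<in> X" by blast
  have Neq: "N = cmp (V - W) E x1" using component_eq[OF G N x1(1)] .
  obtain Q P' where "Q \<in> PP" "P' \<in> PP" "t \<in> Q" "rev_sep t \<in> P'" using R_dist[OF tR] by blast
  then have "snd t - fst t \<noteq> {}" using rt_ne by blast
  moreover have "snd t - fst t = V - (N \<union> W)" unfolding N_def W_def using ts by (auto simp: is_sep_def)
  ultimately have Rest: "V - (N \<union> W) \<noteq> {}" by simp
  have restcomp: "\<And>q. q \<in> V - (N \<union> W) \<Longrightarrow> component_of V E W (cmp (V - W) E q) \<and> cmp (V - W) E q \<subseteq> V - (N \<union> W)"
  proof -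
    fix q assume q: "q \<in> V - (N \<union> W)"
    have Qc: "component_of V E W (cmp (V - W) E q)" using comp_component[OF G] q by blast
    have "cmp (V - W) E q \<inter> N = {}"
    proof (rule ccontr)
      assume "cmp (V - W) E q \<inter> N \<noteq> {}"
      then obtain m where m: "m \<in> cmp (V - W) E q" "m \<in> N" by blast
      have "N = cmp (V - W) E m" using component_eq[OF G N m(2)] .
      moreover have "cmp (V - W) E q \<subseteq> cmp (V - W) E m"
        using connected_sub_comp[of E "cmp (V - W) E q" "V - W" m] Qc m(1) by (auto simp: component_of_def)
      moreover have "q \<in> cmp (V - W) E q" by (simp add: cmp_def)
      ultimately show False using q by blast
    qed
    then show "component_of V E W (cmp (V - W) E q) \<and> cmp (V - W) E q \<subseteq> V - (N \<union> W)"
      using Qc by (auto simp: component_of_def)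
  qed
  have "\<not> X \<subseteq> N \<union> W"
  proof
    assume XNW: "X \<subseteq> N \<union> W"
    have sidesq: "\<And>q. q \<in> V - (N \<union> W) \<Longrightarrow> (q \<in> K \<and> W \<subseteq> K \<union> X) \<or> (q \<notin> K \<and> W \<inter> K = {})"
    proof -
      fix q assume q: "q \<in> V - (N \<union> W)"
      define Qc where "Qc = cmp (V - W) E q"
      have Qc: "component_of V E W Qc" "Qc \<subseteq> V - (N \<union> W)" using restcomp[OF q] by (auto simp: Qc_def)
      have qQ: "q \<in> Qc" by (simp add: Qc_def cmp_def)
      have "connected_in E Qc" "Qc \<subseteq> V - X" using Qc XNW by (auto simp: component_of_def)
      from side[OF K XV this WV tightW[OF Qc(1)]] show "(q \<in> K \<and> W \<subseteq> K \<union> X) \<or> (q \<notin> K \<and> W \<inter> K = {})"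
        using qQ by blast
    qed
    show False
    proof (cases "\<exists>q\<in>V - (N \<union> W). q \<in> K")
      case True
      then obtain q1 where q1: "q1 \<in> V - (N \<union> W)" "q1 \<in> K" by blast
      show False
      proof (cases "\<exists>q\<in>V - (N \<union> W). q \<notin> K")
        case True
        then obtain q2 where q2: "q2 \<in> V - (N \<union> W)" "q2 \<notin> K" by blast
        have "W \<subseteq> K \<union> X" "W \<inter> K = {}" using sidesq[OF q1(1)] sidesq[OF q2(1)] q1(2) q2(2) by auto
        then have "W \<subseteq> X" by blast
        then have "W = X" using Xf Wf card_subset_eq by metis
        moreover have "N \<inter> W = {}" using N by (auto simp: component_of_def)
        ultimately show False using NX by blast
      next
        case False
        then have restK: "V - (N \<union> W) \<subseteq> K" by blast
        have "W \<subseteq> K \<union> X" using sidesq[OF q1(1)] q1(2) by auto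
        then have "sep_le (rev_sep (K \<union> X, V - K)) (N \<union> W, V - N)" using restK by (auto simp: sep_le_def rev_sep_def)
        then have "nested (N \<union> W, V - N) (K \<union> X, V - K)" unfolding nested_def by blast
        then show False using nn by blast
      qed
    next
      case False
      then have restK: "(V - (N \<union> W)) \<inter> K = {}" by blast
      obtain q where q: "q \<in> V - (N \<union> W)" using Rest by blast
      have WK: "W \<inter> K = {}" using sidesq[OF q] q False by blast
      have "sep_le (K \<union> X, V - K) (N \<union> W, V - N)" using restK WK KV XNW by (auto simp: sep_le_def)
      then have "nested (N \<union> W, V - N) (K \<union> X, V - K)" unfolding nested_def by blast
      then show False using nn by blast
    qed
  qed
  then obtain x2 where x2: "x2 \<in> X" "x2 \<notin> N" "x2 \<notin> W" by blast
  have x2V: "x2 \<in> V - W" using x2 XV by blast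
  have Q2: "component_of V E W (cmp (V - W) E x2)" using comp_component[OF G x2V] .
  have x1V: "x1 \<in> V - W" using x1 N by (auto simp: component_of_def)
  have ts12: "tsep V E x1 x2 W"
    unfolding tsep_def
  proof (intro conjI ballI)
    show "W \<subseteq> V" "x1 \<in> V - W" "x2 \<in> V - W" using WV x1V x2V by auto
    show "\<not> reach (V - W) E x1 x2" using x2(2) Neq by (simp add: cmp_def)
  next
    fix w assume w: "w \<in> W"
    obtain c where c: "c \<in> N" "E c w" using adjN w by blast
    obtain d where d: "d \<in> cmp (V - W) E x2" "E d w" using tightW[OF Q2] w by blast
    show "\<exists>x. reach (V - W) E x1 x \<and> E x w" using c Neq by (auto simp: cmp_def)
    show "\<exists>y. reach (V - W) E x2 y \<and> E y w" using d by (auto simp: cmp_def)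
  qed
  have teq2: "t = (cmp (V - W) E x1 \<union> W, V - cmp (V - W) E x1)" using teq Neq by simp
  show ?thesis unfolding W_def[symmetric] X_def[symmetric] using x1 x2 Wf ts12 teq2 by blast
qed

lemma cross_finite:
  assumes r: "r \<in> SS" shows "finite (crossing_set SS r)"
proof -
  define X where "X = fst r \<inter> snd r"
  have Xf: "finite X" using R_ord[OF SS_R[OF r]] by (simp add: X_def)
  define TW where "TW = (\<Union>x1\<in>X. \<Union>x2\<in>X. {W. tsep V E x1 x2 W \<and> finite W \<and> card W = k})"
  have TWf: "finite TW" unfolding TW_def by (intro finite_UN_I Xf tw_finite[OF graph_sym[OF G]])
  define f where "f = (\<lambda>(x, W). (cmp (V - W) E x \<union> W, V - cmp (V - W) E x))"
  have sub: "crossing_set SS r \<subseteq> f ` (X \<times> TW)"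
  proof
    fix t assume "t \<in> crossing_set SS r"
    then have t: "t \<in> SS" "crosses t r" by (auto simp: crossing_set_def)
    from cross_struct[OF r t] obtain x1 x2 where
      x12: "x1 \<in> X" "x2 \<in> X" "tsep V E x1 x2 (fst t \<inter> snd t)" "finite (fst t \<inter> snd t)"
      "card (fst t \<inter> snd t) = k"
      and teq: "t = (cmp (V - (fst t \<inter> snd t)) E x1 \<union> (fst t \<inter> snd t), V - cmp (V - (fst t \<inter> snd t)) E x1)"
      unfolding X_def by blast
    have "fst t \<inter> snd t \<in> TW" unfolding TW_def using x12 by blast
    then have "(x1, fst t \<inter> snd t) \<in> X \<times> TW" using x12 by simp
    moreover have "t = f (x1, fst t \<inter> snd t)" using teq by (simp add: f_def)
    ultimately show "t \<in> f ` (X \<times> TW)" by (rule rev_image_eqI)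
  qed
  show ?thesis by (rule finite_subset[OF sub finite_imageI[OF finite_cartesian_product[OF Xf TWf]]])
qed

end


definition meet :: "'a sep \<Rightarrow> 'a sep \<Rightarrow> 'a sep" where
  "meet x y = (fst x \<inter> fst y, snd x \<union> snd y)"

lemma rev_rev[simp]: "rev_sep (rev_sep x) = x" by (simp add: rev_sep_def)

lemma sep_le_trans: "sep_le a b \<Longrightarrow> sep_le b c \<Longrightarrow> sep_le a c"
  by (auto simp: sep_le_def)

lemma sep_le_rev: "sep_le a b \<longleftrightarrow> sep_le (rev_sep b) (rev_sep a)"
  by (auto simp: sep_le_def rev_sep_def)

lemma meet_le1: "sep_le (meet x y) x" by (auto simp: sep_le_def meet_def)
lemma meet_le2: "sep_le (meet x y) y" by (auto simp: sep_le_def meet_def)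
lemma meet_glb: "sep_le u x \<Longrightarrow> sep_le u y \<Longrightarrow> sep_le u (meet x y)"
  by (auto simp: sep_le_def meet_def)
lemma meet_comm: "meet x y = meet y x" by (auto simp: meet_def)
lemma le_rev_meet: "sep_le x (rev_sep (meet (rev_sep x) (rev_sep y)))"
  by (auto simp: sep_le_def meet_def rev_sep_def)

lemma nested_sym: "nested s t \<longleftrightarrow> nested t s"
  by (auto simp: nested_def sep_le_def rev_sep_def)

lemma nested_rev: "nested t (rev_sep s) \<longleftrightarrow> nested t s"
  by (auto simp: nested_def sep_le_def rev_sep_def)

lemma crosses_rev: "crosses t (rev_sep s) \<longleftrightarrow> crosses t s"
  by (simp add: crosses_def nested_rev)

lemma crosses_sym: "crosses t s \<longleftrightarrow> crosses s t"
  by (simp add: crosses_def nested_sym)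

lemma nestedI1: "sep_le t c \<Longrightarrow> nested t c" by (simp add: nested_def)
lemma nestedI2: "sep_le c t \<Longrightarrow> nested t c" by (simp add: nested_def)
lemma nestedI3: "sep_le t (rev_sep c) \<Longrightarrow> nested t c" by (simp add: nested_def)
lemma nestedI4: "sep_le (rev_sep c) t \<Longrightarrow> nested t c" by (simp add: nested_def)
lemma nestedI3': "sep_le c (rev_sep t) \<Longrightarrow> nested t c"
  by (rule nestedI3) (metis rev_rev sep_le_rev)
lemma nestedI4': "sep_le (rev_sep t) c \<Longrightarrow> nested t c"
  by (rule nestedI4) (metis rev_rev sep_le_rev)

lemma fish1:
  assumes cr: "crosses x y" and tx: "nested t x" and ty: "nested t y"
  shows "nested t (meet x y)"
proof -
  have m1: "sep_le (meet x y) x" and m2: "sep_le (meet x y) y" by (rule meet_le1, rule meet_le2)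
  have nxy: "\<not> nested x y" using cr by (simp add: crosses_def)
  show ?thesis
  proof (cases "sep_le x t \<or> sep_le t (rev_sep x) \<or> sep_le y t \<or> sep_le t (rev_sep y)")
    case True
    then show ?thesis
    proof (elim disjE)
      assume "sep_le x t" then show ?thesis using sep_le_trans[OF m1] nestedI2 by blast
    next
      assume "sep_le t (rev_sep x)"
      then have "sep_le x (rev_sep t)" by (metis rev_rev sep_le_rev)
      then show ?thesis using sep_le_trans[OF m1] nestedI3' by blast
    next
      assume "sep_le y t" then show ?thesis using sep_le_trans[OF m2] nestedI2 by blast
    next
      assume "sep_le t (rev_sep y)"
      then have "sep_le y (rev_sep t)" by (metis rev_rev sep_le_rev)
      then show ?thesis using sep_le_trans[OF m2] nestedI3' by blast
    qed
  next
    case False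
    then have a: "sep_le t x \<or> sep_le (rev_sep x) t" and b: "sep_le t y \<or> sep_le (rev_sep y) t"
      using tx ty by (auto simp: nested_def)
    show ?thesis
    proof (cases "sep_le t x")
      case tx': True
      show ?thesis
      proof (cases "sep_le t y")
        case True then show ?thesis using meet_glb[OF tx'] nestedI1 by blast
      next
        case False
        then have "sep_le (rev_sep y) t" using b by blast
        then have "sep_le (rev_sep y) x" using sep_le_trans tx' by blast
        then show ?thesis using nxy by (simp add: nested_def)
      qed
    next
      case False
      then have rx: "sep_le (rev_sep x) t" using a by blast
      show ?thesis
      proof (cases "sep_le t y")
        case True
        then have "sep_le (rev_sep x) y" using sep_le_trans rx by blast
        then have "sep_le (rev_sep y) x" by (metis rev_rev sep_le_rev)
        then show ?thesis using nxy by (simp add: nested_def)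
      next
        case False
        then have ry: "sep_le (rev_sep y) t" using b by blast
        have "sep_le (rev_sep t) x" using rx by (metis rev_rev sep_le_rev)
        moreover have "sep_le (rev_sep t) y" using ry by (metis rev_rev sep_le_rev)
        ultimately have "sep_le (rev_sep t) (meet x y)" by (rule meet_glb)
        then show ?thesis by (rule nestedI4')
      qed
    qed
  qed
qed

lemma fish2:
  assumes tx: "nested t x"
  shows "nested t (meet x y) \<or> nested t (meet (rev_sep x) (rev_sep y))"
proof -
  have j1: "sep_le x (rev_sep (meet (rev_sep x) (rev_sep y)))" by (rule le_rev_meet)
  have j2: "sep_le (rev_sep x) (rev_sep (meet x y))"
    using le_rev_meet[of "rev_sep x" "rev_sep y"] by simp
  from tx consider "sep_le t x" | "sep_le x t" | "sep_le t (rev_sep x)" | "sep_le (rev_sep x) t"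
    by (auto simp: nested_def)
  then show ?thesis
  proof cases
    case 1 then show ?thesis using sep_le_trans[OF 1 j1] nestedI3 by blast
  next
    case 2 then show ?thesis using sep_le_trans[OF meet_le1 2] nestedI2 by blast
  next
    case 3 then show ?thesis using sep_le_trans[OF 3 j2] nestedI3 by blast
  next
    case 4 then show ?thesis using sep_le_trans[OF meet_le1 4] nestedI2 by blast
  qed
qed

lemma meet_sep: "is_sep V E x \<Longrightarrow> is_sep V E y \<Longrightarrow> is_sep V E (meet x y)"
  unfolding is_sep_def meet_def by (simp; blast)

lemma submod_sets:
  assumes "is_sep V E x" "is_sep V E y"
  shows "fst (meet x y) \<inter> snd (meet x y) \<union> fst (meet (rev_sep x) (rev_sep y)) \<inter> snd (meet (rev_sep x) (rev_sep y))
      = (fst x \<inter> snd x) \<union> (fst y \<inter> snd y)"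
    and "(fst (meet x y) \<inter> snd (meet x y)) \<inter> (fst (meet (rev_sep x) (rev_sep y)) \<inter> snd (meet (rev_sep x) (rev_sep y)))
      = (fst x \<inter> snd x) \<inter> (fst y \<inter> snd y)"
  using assms unfolding is_sep_def meet_def rev_sep_def by auto

lemma card_le_card: "card_le X Y \<Longrightarrow> finite Y \<Longrightarrow> card X \<le> card Y"
  unfolding card_le_def using card_inj_on_le by blast

context setting begin

lemma restcomp:
  assumes t: "t \<in> SS" and q: "q \<in> V - ((fst t - snd t) \<union> (fst t \<inter> snd t))"
  shows "component_of V E (fst t \<inter> snd t) (cmp (V - (fst t \<inter> snd t)) E q)"
    "cmp (V - (fst t \<inter> snd t)) E q \<subseteq> V - ((fst t - snd t) \<union> (fst t \<inter> snd t))"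
proof -
  define W where "W = fst t \<inter> snd t"
  define N where "N = fst t - snd t"
  have N: "component_of V E W N" using SS_comp[OF t] by (simp add: N_def W_def)
  have q': "q \<in> V - (N \<union> W)" unfolding N_def W_def using q .
  have Qc: "component_of V E W (cmp (V - W) E q)" using comp_component[OF G] q' by blast
  have "cmp (V - W) E q \<inter> N = {}"
  proof (rule ccontr)
    assume "cmp (V - W) E q \<inter> N \<noteq> {}"
    then obtain m where m: "m \<in> cmp (V - W) E q" "m \<in> N" by blast
    have "N = cmp (V - W) E m" using component_eq[OF G N m(2)] .
    moreover have "cmp (V - W) E q \<subseteq> cmp (V - W) E m"
      using connected_sub_comp[of E "cmp (V - W) E q" "V - W" m] Qc m(1) by (auto simp: component_of_def)
    moreover have "q \<in> cmp (V - W) E q" by (simp add: cmp_def)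
    ultimately show False using q' by blast
  qed
  then have "cmp (V - W) E q \<subseteq> V - (N \<union> W)" using Qc by (auto simp: component_of_def)
  then show "component_of V E (fst t \<inter> snd t) (cmp (V - (fst t \<inter> snd t)) E q)"
    "cmp (V - (fst t \<inter> snd t)) E q \<subseteq> V - ((fst t - snd t) \<union> (fst t \<inter> snd t))"
    using Qc by (simp_all add: N_def W_def)
qed

lemma conn_in_comp:
  assumes M: "component_of V E Z M" and N: "connected_in E N" "N \<subseteq> V - Z" and m: "m \<in> N" "m \<in> M"
  shows "N \<subseteq> M"
proof -
  have "M = cmp (V - Z) E m" using component_eq[OF G M m(2)] .
  moreover have "N \<subseteq> cmp (V - Z) E m" using connected_sub_comp[OF N m(1)] .
  ultimately show ?thesis by simp
qed

lemma transfer: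
  assumes c: "c \<in> RR" and M: "component_of V E (fst c \<inter> snd c) M" and Mc: "M \<subseteq> fst c - snd c"
    and t: "t \<in> SS" and ntc: "nested t c"
  shows "nested t (M \<union> (fst c \<inter> snd c), V - M)"
proof -
  define Z where "Z = fst c \<inter> snd c"
  define W where "W = fst t \<inter> snd t"
  define N where "N = fst t - snd t"
  have cs: "is_sep V E c" using R_sep[OF c] .
  have ts: "is_sep V E t" using R_sep[OF SS_R[OF t]] .
  have ZV: "Z \<subseteq> V" using cs by (auto simp: Z_def is_sep_def)
  have M': "component_of V E Z M" using M by (simp add: Z_def)
  have MV: "M \<subseteq> V - Z" using M' by (simp add: component_of_def)
  have Mcl: "\<forall>x\<in>M. \<forall>y\<in>V - Z. E x y \<longrightarrow> y \<in> M" using M' by (simp add: component_of_def)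
  have nbM: "nbhd V E M = Z" using tight[OF c M] by (simp add: Z_def)
  have N: "component_of V E W N" using SS_comp[OF t] by (simp add: N_def W_def)
  have NV: "N \<subseteq> V - W" and Ncon: "connected_in E N" using N by (auto simp: component_of_def)
  have WV: "W \<subseteq> V" using ts by (auto simp: W_def is_sep_def)
  have tR: "t \<in> RR" using SS_R[OF t] .
  have adjN: "\<forall>w\<in>W. \<exists>x\<in>N. E x w" using tight_adj[OF tR] N by (simp add: W_def)
  have teq: "t = (N \<union> W, V - N)" using sep_form[OF ts] by (simp add: N_def W_def)
  have c'le: "sep_le (M \<union> Z, V - M) c" using Mc cs by (auto simp: sep_le_def Z_def is_sep_def)
  obtain Q P' where "Q \<in> PP" "P' \<in> PP" "t \<in> Q" "rev_sep t \<in> P'" using R_dist[OF tR] by blast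
  then have "snd t - fst t \<noteq> {}" using rt_ne by blast
  moreover have "snd t - fst t = V - (N \<union> W)" unfolding N_def W_def using ts by (auto simp: is_sep_def)
  ultimately have Rest: "V - (N \<union> W) \<noteq> {}" by simp
  have rc: "\<And>q. q \<in> V - (N \<union> W) \<Longrightarrow> component_of V E W (cmp (V - W) E q) \<and> cmp (V - W) E q \<subseteq> V - (N \<union> W)"
    unfolding N_def W_def using restcomp[OF t] by blast
  have tightW: "\<And>C. component_of V E W C \<Longrightarrow> \<forall>w\<in>W. \<exists>x\<in>C. E x w"
    using tight_adj[OF tR] by (simp add: W_def)
  from ntc consider "sep_le c t" | "sep_le t (rev_sep c)" | "sep_le t c" | "sep_le (rev_sep c) t"
    by (auto simp: nested_def)
  then have "nested t (M \<union> Z, V - M)"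
  proof cases
    case 1 then show ?thesis using sep_le_trans[OF c'le 1] nestedI2 by blast
  next
    case 2
    then have "sep_le c (rev_sep t)" by (metis rev_rev sep_le_rev)
    then show ?thesis using sep_le_trans[OF c'le] nestedI3' by blast
  next
    case 3
    then have NW: "N \<union> W \<subseteq> fst c" "snd c \<subseteq> V - N" using teq by (auto simp: sep_le_def)
    then have ZN: "Z \<inter> N = {}" by (auto simp: Z_def)
    show ?thesis
    proof (cases "N \<inter> M = {}")
      case False
      then obtain m where m: "m \<in> N" "m \<in> M" by blast
      have NZ: "N \<subseteq> V - Z" using NV ZN by blast
      have NM: "N \<subseteq> M" using conn_in_comp[OF M' Ncon NZ m] .
      have "W \<subseteq> M \<union> Z"
      proof
        fix w assume w: "w \<in> W"
        then obtain x where x: "x \<in> N" "E x w" using adjN by blast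
        show "w \<in> M \<union> Z" using Mcl x NM w WV by blast
      qed
      then have "sep_le t (M \<union> Z, V - M)" using teq NM by (auto simp: sep_le_def)
      then show ?thesis by (rule nestedI1)
    next
      case True
      have "W \<inter> M = {}"
      proof (rule ccontr)
        assume "W \<inter> M \<noteq> {}"
        then obtain w where w: "w \<in> W" "w \<in> M" by blast
        then obtain x where x: "x \<in> N" "E x w" using adjN by blast
        have "x \<in> V - Z" using x(1) NV ZN by blast
        then have "x \<in> M" using Mcl w(2) Esym[OF x(2)] by blast
        then show False using True x(1) by blast
      qed
      then have "sep_le t (rev_sep (M \<union> Z, V - M))"
        using teq True ZN NV WV MV ZV by (auto simp: sep_le_def rev_sep_def)
      then show ?thesis by (rule nestedI3)
    qed
  next
    case 4
    then have a4: "snd c \<subseteq> N \<union> W" "V - N \<subseteq> fst c" using teq by (auto simp: sep_le_def rev_sep_def)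
    have ZNW: "Z \<subseteq> N \<union> W" using a4 by (auto simp: Z_def)
    show ?thesis
    proof (cases "M \<subseteq> N")
      case True
      then have "sep_le (M \<union> Z, V - M) t" using teq ZNW by (auto simp: sep_le_def)
      then show ?thesis by (rule nestedI2)
    next
      case MN: False
      show ?thesis
      proof (cases "M \<inter> W = {}")
        case True
        obtain m where m: "m \<in> M" "m \<notin> N" using MN by blast
        have mR: "m \<in> V - (N \<union> W)" using m True MV by blast
        define Qc where "Qc = cmp (V - W) E m"
        have Qc: "component_of V E W Qc" "Qc \<subseteq> V - (N \<union> W)" using rc[OF mR] by (auto simp: Qc_def)
        have mQ: "m \<in> Qc" by (simp add: Qc_def cmp_def)
        have "connected_in E Qc" "Qc \<subseteq> V - Z" using Qc ZNW by (auto simp: component_of_def)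
        then have QM: "Qc \<subseteq> M" using conn_in_comp[OF M' _ _ mQ m(1)] by blast
        have "connected_in E M" "M \<subseteq> V - W" using M' True MV by (auto simp: component_of_def)
        then have MQ: "M \<subseteq> Qc" using conn_in_comp[OF Qc(1) _ _ m(1) mQ] by blast
        have MQe: "M = Qc" using QM MQ by blast
        have "nbhd V E Qc = W" using tight[OF tR] Qc(1) by (simp add: W_def)
        then have ZW: "Z = W" using nbM MQe by simp
        have "sep_le t (rev_sep (M \<union> Z, V - M))"
          using teq ZW MQe Qc(2) True MV NV WV by (auto simp: sep_le_def rev_sep_def)
        then show ?thesis by (rule nestedI3)
      next
        case False
        then obtain w0 where w0: "w0 \<in> M" "w0 \<in> W" by blast
        have RM: "V - (N \<union> W) \<subseteq> M"
        proof
          fix q assume q: "q \<in> V - (N \<union> W)"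
          define Qc where "Qc = cmp (V - W) E q"
          have Qc: "component_of V E W Qc" "Qc \<subseteq> V - (N \<union> W)" using rc[OF q] by (auto simp: Qc_def)
          obtain d where d: "d \<in> Qc" "E d w0" using tightW[OF Qc(1)] w0(2) by blast
          have dZ: "d \<in> V - Z" using d(1) Qc(2) ZNW by blast
          have dM: "d \<in> M" using Mcl w0(1) dZ Esym[OF d(2)] by blast
          have "connected_in E Qc" "Qc \<subseteq> V - Z" using Qc ZNW by (auto simp: component_of_def)
          then have "Qc \<subseteq> M" using conn_in_comp[OF M' _ _ d(1) dM] by blast
          moreover have "q \<in> Qc" by (simp add: Qc_def cmp_def)
          ultimately show "q \<in> M" by blast
        qed
        obtain q where q: "q \<in> V - (N \<union> W)" using Rest by blast
        define Qc where "Qc = cmp (V - W) E q"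
        have Qc: "component_of V E W Qc" "Qc \<subseteq> V - (N \<union> W)" using rc[OF q] by (auto simp: Qc_def)
        have WMZ: "W \<subseteq> M \<union> Z"
        proof
          fix w assume w: "w \<in> W"
          obtain d where d: "d \<in> Qc" "E d w" using tightW[OF Qc(1)] w by blast
          have "d \<in> M" using d(1) Qc(2) RM by blast
          then show "w \<in> M \<union> Z" using Mcl d(2) w WV by blast
        qed
        have "sep_le (rev_sep t) (M \<union> Z, V - M)"
          using teq RM WMZ by (auto simp: sep_le_def rev_sep_def)
        then show ?thesis by (rule nestedI4')
      qed
    qed
  qed
  then show ?thesis by (simp add: Z_def)
qed

lemma shrink:
  assumes c: "c \<in> RR" and Q1: "Q1 \<in> PP" "rev_sep c \<in> Q1" and Q2: "Q2 \<in> PP" "c \<in> Q2"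
  shows "\<exists>c'. c' \<in> SS \<and> crossing_set SS c' \<subseteq> crossing_set SS c"
proof -
  define Z where "Z = fst c \<inter> snd c"
  obtain M where M: "component_of V E (fst (rev_sep c) \<inter> snd (rev_sep c)) M"
    "M \<subseteq> snd (rev_sep c) - fst (rev_sep c)"
    "(V - M, M \<union> (fst (rev_sep c) \<inter> snd (rev_sep c))) \<in> Q1"
    using princ_comp[OF Q1] by blast
  have M': "component_of V E Z M" "M \<subseteq> fst c - snd c" "(V - M, M \<union> Z) \<in> Q1"
    using M by (auto simp: rev_sep_def Z_def Int_commute)
  have cs: "is_sep V E c" using R_sep[OF c] .
  have ZV: "Z \<subseteq> V" using cs by (auto simp: Z_def is_sep_def)
  have Zf: "finite Z" "card Z = k" using R_ord[OF c] by (auto simp: Z_def)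
  define c' where "c' = (M \<union> Z, V - M)"
  have c's: "is_sep V E c'" "fst c' \<inter> snd c' = Z" using comp_sep[OF G M'(1) ZV] by (auto simp: c'_def)
  have c'le: "sep_le c' c" using M'(2) cs by (auto simp: sep_le_def Z_def is_sep_def c'_def)
  have "rev_sep c' \<notin> Q2" using p1[OF Q2(1) Q2(2) c'le] .
  then have inQ2: "c' \<in> Q2" using orient'[OF Q2(1) c's(1)] c's(2) Zf by auto
  have inQ1: "rev_sep c' \<in> Q1" using M'(3) by (simp add: c'_def rev_sep_def)
  have c'R: "c' \<in> RR" using R_intro[OF c's(1) _ _ Q2(1) Q1(1) inQ2 inQ1] c's(2) Zf by simp
  have MZ: "M \<inter> Z = {}" "M \<subseteq> V" using M'(1) by (auto simp: component_of_def)
  have "fst c' - snd c' = M" using MZ ZV by (auto simp: c'_def)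
  then have "left_connected E c'" using M'(1) by (simp add: left_connected_def component_of_def)
  then have c'S: "c' \<in> SS" using c'R by (simp add: R_lc_def kappa)
  have "crossing_set SS c' \<subseteq> crossing_set SS c"
  proof
    fix t assume "t \<in> crossing_set SS c'"
    then have t: "t \<in> SS" "crosses t c'" by (auto simp: crossing_set_def)
    have "\<not> nested t c"
    proof
      assume "nested t c"
      then have "nested t c'" using transfer[OF c M'(1)[unfolded Z_def] M'(2) t(1)] by (simp add: c'_def Z_def)
      then show False using t(2) by (simp add: crosses_def)
    qed
    then show "t \<in> crossing_set SS c" using t(1) by (simp add: crossing_set_def crosses_def)
  qed
  then show ?thesis using c'S by blast
qed

end


context setting begin

lemma O_eq: "O_set V E PP = {s \<in> SS. \<forall>t\<in>SS. card_le (crossing_set SS s) (crossing_set SS t)}"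
  by (simp add: O_set_def kappa Let_def)

lemma sep_rev_is: "is_sep V E x \<Longrightarrow> is_sep V E (rev_sep x)"
  unfolding is_sep_def rev_sep_def using Esym by auto

lemma cdist:
  assumes xs: "is_sep V E x" and ys: "is_sep V E y"
    and f: "finite (fst (meet x y) \<inter> snd (meet x y))" and c: "card (fst (meet x y) \<inter> snd (meet x y)) \<le> k"
    and Q1: "Q1 \<in> PP" "rev_sep x \<in> Q1" "rev_sep y \<in> Q1"
    and Q2: "Q2 \<in> PP" "x \<in> Q2"
  shows "rev_sep (meet x y) \<in> Q1 \<and> meet x y \<in> Q2 \<and> meet x y \<in> RR"
proof -
  have ms: "is_sep V E (meet x y)" using meet_sep[OF xs ys] .
  have "(snd (rev_sep x) \<inter> snd (rev_sep y), fst (rev_sep x) \<union> fst (rev_sep y)) \<notin> Q1"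
    using p2[OF Q1] .
  then have "meet x y \<notin> Q1" by (simp add: meet_def rev_sep_def)
  then have a: "rev_sep (meet x y) \<in> Q1" using orient'[OF Q1(1) ms f c] by blast
  have "rev_sep (meet x y) \<notin> Q2" using p1[OF Q2 meet_le1] .
  then have b: "meet x y \<in> Q2" using orient'[OF Q2(1) ms f c] by blast
  have "meet x y \<in> RR" using R_intro[OF ms f c Q2(1) Q1(1) b a] .
  then show ?thesis using a b by blast
qed

lemma corners:
  assumes xs: "is_sep V E x" and ys: "is_sep V E y"
    and xf: "finite (fst x \<inter> snd x)" "card (fst x \<inter> snd x) = k"
    and yf: "finite (fst y \<inter> snd y)" "card (fst y \<inter> snd y) = k"
    and Q1: "Q1 \<in> PP" "rev_sep x \<in> Q1" "rev_sep y \<in> Q1"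
    and Q2: "Q2 \<in> PP" "x \<in> Q2" "y \<in> Q2"
  shows "rev_sep (meet x y) \<in> Q1 \<and> meet x y \<in> Q2 \<and> meet x y \<in> RR"
    "rev_sep (meet (rev_sep x) (rev_sep y)) \<in> Q2 \<and> meet (rev_sep x) (rev_sep y) \<in> Q1 \<and>
     meet (rev_sep x) (rev_sep y) \<in> RR"
proof -
  define Z1 where "Z1 = fst (meet x y) \<inter> snd (meet x y)"
  define Z2 where "Z2 = fst (meet (rev_sep x) (rev_sep y)) \<inter> snd (meet (rev_sep x) (rev_sep y))"
  have un: "Z1 \<union> Z2 = (fst x \<inter> snd x) \<union> (fst y \<inter> snd y)" and it: "Z1 \<inter> Z2 = (fst x \<inter> snd x) \<inter> (fst y \<inter> snd y)"
    using submod_sets[OF xs ys] by (auto simp: Z1_def Z2_def)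
  have f12: "finite Z1" "finite Z2" using un xf(1) yf(1) by (metis finite_Un)+
  have "card Z1 + card Z2 = card (Z1 \<union> Z2) + card (Z1 \<inter> Z2)" using card_Un_Int[OF f12] .
  also have "\<dots> = card (fst x \<inter> snd x) + card (fst y \<inter> snd y)"
    unfolding un it using card_Un_Int[OF xf(1) yf(1)] by simp
  finally have sum: "card Z1 + card Z2 = 2 * k" using xf yf by simp
  have rxs: "is_sep V E (rev_sep x)" and rys: "is_sep V E (rev_sep y)"
    using xs ys sep_rev_is by auto
  have Q2': "rev_sep (rev_sep x) \<in> Q2" "rev_sep (rev_sep y) \<in> Q2" using Q2 by simp_all
  have C1: "card Z1 \<le> k \<Longrightarrow> rev_sep (meet x y) \<in> Q1 \<and> meet x y \<in> Q2 \<and> meet x y \<in> RR"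
    using cdist[OF xs ys _ _ Q1 Q2(1,2)] f12 by (simp add: Z1_def)
  have C2: "card Z2 \<le> k \<Longrightarrow> rev_sep (meet (rev_sep x) (rev_sep y)) \<in> Q2 \<and> meet (rev_sep x) (rev_sep y) \<in> Q1 \<and>
     meet (rev_sep x) (rev_sep y) \<in> RR"
    using cdist[OF rxs rys _ _ Q2(1) Q2' Q1(1,2)] f12 by (simp add: Z2_def)
  have "card Z1 \<le> k"
  proof (rule ccontr)
    assume "\<not> card Z1 \<le> k"
    then have "card Z2 < k" using sum by simp
    then have "meet (rev_sep x) (rev_sep y) \<in> RR" using C2 by simp
    then have "card Z2 = k" using R_ord by (simp add: Z2_def)
    then show False using \<open>card Z2 < k\<close> by simp
  qed
  moreover have "card Z2 \<le> k"
  proof (rule ccontr)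
    assume "\<not> card Z2 \<le> k"
    then have "card Z1 < k" using sum by simp
    then have "meet x y \<in> RR" using C1 by simp
    then have "card Z1 = k" using R_ord by (simp add: Z1_def)
    then show False using \<open>card Z1 < k\<close> by simp
  qed
  ultimately show "rev_sep (meet x y) \<in> Q1 \<and> meet x y \<in> Q2 \<and> meet x y \<in> RR"
    "rev_sep (meet (rev_sep x) (rev_sep y)) \<in> Q2 \<and> meet (rev_sep x) (rev_sep y) \<in> Q1 \<and>
     meet (rev_sep x) (rev_sep y) \<in> RR" using C1 C2 by blast+
qed

lemma cross_rev_set: "crossing_set SS (rev_sep s) = crossing_set SS s"
  by (simp add: crossing_set_def crosses_rev)

lemma regions:
  assumes r: "r \<in> RR" and s: "s \<in> RR"
  obtains x y Q1 Q2 where "x = r \<or> x = rev_sep r" "y = s \<or> y = rev_sep s" "Q1 \<in> PP" "Q2 \<in> PP"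
    "rev_sep x \<in> Q1" "rev_sep y \<in> Q1" "x \<in> Q2" "y \<in> Q2"
proof -
  obtain P1 P2 where P12: "P1 \<in> PP" "P2 \<in> PP" "r \<in> P1" "rev_sep r \<in> P2" using R_dist[OF r] by blast
  obtain P3 P4 where P34: "P3 \<in> PP" "P4 \<in> PP" "s \<in> P3" "rev_sep s \<in> P4" using R_dist[OF s] by blast
  have os: "\<And>Q. Q \<in> PP \<Longrightarrow> s \<in> Q \<or> rev_sep s \<in> Q"
    using orient'[OF _ R_sep[OF s]] R_ord[OF s] by simp
  have or: "\<And>Q. Q \<in> PP \<Longrightarrow> r \<in> Q \<or> rev_sep r \<in> Q"
    using orient'[OF _ R_sep[OF r]] R_ord[OF r] by simp
  show ?thesis
  proof (cases "s \<in> P1")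
    case s1: True
    show ?thesis
    proof (cases "s \<in> P2")
      case s2: True
      show ?thesis
      proof (cases "r \<in> P4")
        case True
        show ?thesis using that[of "rev_sep r" s P4 P2] True P12 P34 s2 by simp
      next
        case False
        then have "rev_sep r \<in> P4" using or[OF P34(2)] by blast
        then show ?thesis using that[of r s P4 P1] P12 P34 s1 by simp
      qed
    next
      case False
      then have "rev_sep s \<in> P2" using os[OF P12(2)] by blast
      then show ?thesis using that[of r s P2 P1] P12 s1 by simp
    qed
  next
    case False
    then have s1: "rev_sep s \<in> P1" using os[OF P12(1)] by blast
    show ?thesis
    proof (cases "s \<in> P2")
      case s2: True
      then show ?thesis using that[of r "rev_sep s" P2 P1] P12 s1 by simp
    next
      case False
      then have s2: "rev_sep s \<in> P2" using os[OF P12(2)] by blast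
      show ?thesis
      proof (cases "r \<in> P3")
        case True
        show ?thesis using that[of r s P2 P3] True P12 P34 s2 by simp
      next
        case False
        then have "rev_sep r \<in> P3" using or[OF P34(1)] by blast
        then show ?thesis using that[of r "rev_sep s" P3 P1] P12 P34 s1 by simp
      qed
    qed
  qed
qed


lemma O_nested: "nested_set (O_set V E PP)"
  unfolding nested_set_def
proof (intro ballI)
  fix r s assume rO: "r \<in> O_set V E PP" and sO: "s \<in> O_set V E PP"
  have rS: "r \<in> SS" and sS: "s \<in> SS" using rO sO O_eq by auto
  have rmin: "\<And>t. t \<in> SS \<Longrightarrow> card_le (crossing_set SS r) (crossing_set SS t)" using rO O_eq by auto
  have smin: "\<And>t. t \<in> SS \<Longrightarrow> card_le (crossing_set SS s) (crossing_set SS t)" using sO O_eq by auto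
  show "nested r s"
  proof (rule ccontr)
    assume nrs: "\<not> nested r s"
    have rR: "r \<in> RR" and sR: "s \<in> RR" using rS sS SS_R by auto
    obtain x y Q1 Q2 where xy: "x = r \<or> x = rev_sep r" "y = s \<or> y = rev_sep s" "Q1 \<in> PP" "Q2 \<in> PP"
      "rev_sep x \<in> Q1" "rev_sep y \<in> Q1" "x \<in> Q2" "y \<in> Q2"
      using regions[OF rR sR] by blast
    have xs: "is_sep V E x" using xy(1) R_sep[OF rR] sep_rev_is by blast
    have ys: "is_sep V E y" using xy(2) R_sep[OF sR] sep_rev_is by blast
    have xf: "finite (fst x \<inter> snd x)" "card (fst x \<inter> snd x) = k"
      using xy(1) R_ord[OF rR] by (auto simp: rev_sep_def Int_commute)
    have yf: "finite (fst y \<inter> snd y)" "card (fst y \<inter> snd y) = k"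
      using xy(2) R_ord[OF sR] by (auto simp: rev_sep_def Int_commute)
    have crxy: "crosses x y"
      using xy(1,2) nrs crosses_rev crosses_sym unfolding crosses_def by metis
    define c1 where "c1 = meet x y"
    define c2 where "c2 = meet (rev_sep x) (rev_sep y)"
    have C: "rev_sep c1 \<in> Q1 \<and> c1 \<in> Q2 \<and> c1 \<in> RR" "rev_sep c2 \<in> Q2 \<and> c2 \<in> Q1 \<and> c2 \<in> RR"
      using corners[OF xs ys xf yf xy(3,5,6) xy(4,7,8)] by (simp_all add: c1_def c2_def)
    obtain c1' where c1': "c1' \<in> SS" "crossing_set SS c1' \<subseteq> crossing_set SS c1"
      using shrink[of c1 Q1 Q2] C(1) xy(3,4) by blast
    obtain c2' where c2': "c2' \<in> SS" "crossing_set SS c2' \<subseteq> crossing_set SS c2"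
      using shrink[of c2 Q2 Q1] C(2) xy(3,4) by blast
    define a where "a = crossing_set SS r"
    define b where "b = crossing_set SS s"
    define e1 where "e1 = crossing_set SS c1"
    define e2 where "e2 = crossing_set SS c2"
    have ax: "crossing_set SS x = a" using xy(1) by (metis a_def cross_rev_set)
    have by': "crossing_set SS y = b" using xy(2) by (metis b_def cross_rev_set)
    have af: "finite a" "finite b" using cross_finite rS sS by (auto simp: a_def b_def)
    have e1sub: "e1 \<subseteq> (a \<union> b) - {s}"
    proof
      fix t assume "t \<in> e1"
      then have t: "t \<in> SS" "crosses t c1" by (auto simp: e1_def crossing_set_def)
      have "crosses t x \<or> crosses t y"
        using fish1[OF crxy, of t] t(2) unfolding crosses_def c1_def by blast
      then have "t \<in> a \<union> b" using t(1) ax by' by (auto simp: crossing_set_def)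
      moreover have "t \<noteq> s"
      proof
        assume "t = s"
        have "sep_le c1 y" by (simp add: c1_def meet_le2)
        then have "nested s c1" using xy(2)
          by (metis nestedI2 nestedI3' rev_rev)
        then show False using t(2) \<open>t = s\<close> by (simp add: crosses_def)
      qed
      ultimately show "t \<in> (a \<union> b) - {s}" by blast
    qed
    have e2sub: "e2 \<subseteq> (a \<union> b) - {s}"
    proof
      fix t assume "t \<in> e2"
      then have t: "t \<in> SS" "crosses t c2" by (auto simp: e2_def crossing_set_def)
      have c2': "c2 = meet (rev_sep x) (rev_sep y)" by (simp add: c2_def)
      have crxy': "crosses (rev_sep x) (rev_sep y)" using crxy crosses_rev crosses_sym by metis
      have "crosses t (rev_sep x) \<or> crosses t (rev_sep y)"
        using fish1[OF crxy', of t] t(2) unfolding crosses_def c2_def by blast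
      then have "crosses t x \<or> crosses t y" using crosses_rev by blast
      then have "t \<in> a \<union> b" using t(1) ax by' by (auto simp: crossing_set_def)
      moreover have "t \<noteq> s"
      proof
        assume "t = s"
        have "sep_le c2 (rev_sep y)" by (simp add: c2_def meet_le2)
        then have "nested s c2" using xy(2)
          by (metis nestedI2 nestedI3' rev_rev)
        then show False using t(2) \<open>t = s\<close> by (simp add: crosses_def)
      qed
      ultimately show "t \<in> (a \<union> b) - {s}" by blast
    qed
    have e12: "e1 \<inter> e2 \<subseteq> a \<inter> b"
    proof
      fix t assume "t \<in> e1 \<inter> e2"
      then have t: "t \<in> SS" "crosses t c1" "crosses t c2" by (auto simp: e1_def e2_def crossing_set_def)
      have "crosses t x"
      proof (rule ccontr)
        assume "\<not> crosses t x"
        then have "nested t x" by (simp add: crosses_def)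
        then show False using fish2[of t x y] t(2,3) by (auto simp: crosses_def c1_def c2_def)
      qed
      moreover have "crosses t y"
      proof (rule ccontr)
        assume "\<not> crosses t y"
        then have "nested t y" by (simp add: crosses_def)
        then have "nested t (meet y x) \<or> nested t (meet (rev_sep y) (rev_sep x))" by (rule fish2)
        then show False using t(2,3) meet_comm[of y x] meet_comm[of "rev_sep y" "rev_sep x"]
          unfolding crosses_def c1_def c2_def by metis
      qed
      ultimately show "t \<in> a \<inter> b" using t(1) ax by' by (auto simp: crossing_set_def)
    qed
    have sab: "s \<in> a" using sS nrs by (auto simp: a_def crossing_set_def crosses_def nested_sym)
    have fab: "finite ((a \<union> b) - {s})" using af by simp
    have fe: "finite e1" "finite e2" using finite_subset[OF e1sub fab] finite_subset[OF e2sub fab] by auto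
    have "card e1 + card e2 = card (e1 \<union> e2) + card (e1 \<inter> e2)" using card_Un_Int[OF fe] .
    also have "\<dots> \<le> card ((a \<union> b) - {s}) + card (a \<inter> b)"
      using card_mono[OF fab] card_mono[of "a \<inter> b"] e1sub e2sub e12 af by (simp add: add_mono)
    also have "\<dots> = card (a \<union> b) - 1 + card (a \<inter> b)" using sab af by simp
    also have "\<dots> < card a + card b"
    proof -
      have "card (a \<union> b) + card (a \<inter> b) = card a + card b" using card_Un_Int[OF af] by simp
      moreover have "card (a \<union> b) \<ge> 1" using sab af by (metis One_nat_def Suc_leI UnI1 card_gt_0_iff empty_iff finite_Un)
      ultimately show ?thesis by linarith
    qed
    finally have lt: "card e1 + card e2 < card a + card b" .
    have fe': "finite (crossing_set SS c1')" "finite (crossing_set SS c2')"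
      using finite_subset[OF c1'(2)] finite_subset[OF c2'(2)] fe by (auto simp: e1_def e2_def)
    have "card a \<le> card (crossing_set SS c1')" using card_le_card[OF rmin[OF c1'(1)] fe'(1)] by (simp add: a_def)
    also have "\<dots> \<le> card e1" using card_mono[OF fe(1)] c1'(2) by (simp add: e1_def)
    finally have A: "card a \<le> card e1" .
    have "card b \<le> card (crossing_set SS c2')" using card_le_card[OF smin[OF c2'(1)] fe'(2)] by (simp add: b_def)
    also have "\<dots> \<le> card e2" using card_mono[OF fe(2)] c2'(2) by (simp add: e2_def)
    finally have B: "card b \<le> card e2" .
    show False using A B lt by linarith
  qed
qed

lemma SS_ne: assumes "RR \<noteq> {}" shows "SS \<noteq> {}"
proof -
  obtain s where s: "s \<in> RR" using assms by blast
  obtain P P' where "P \<in> PP" "P' \<in> PP" "s \<in> P" "rev_sep s \<in> P'" using R_dist[OF s] by blast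
  then show ?thesis using shrink[OF s] by blast
qed

lemma O_ne: assumes "RR \<noteq> {}" shows "O_set V E PP \<noteq> {}"
proof -
  obtain s0 where s0: "s0 \<in> SS" using SS_ne[OF assms] by blast
  obtain s where s: "s \<in> SS" and m: "\<forall>t. t \<in> SS \<longrightarrow> card (crossing_set SS s) \<le> card (crossing_set SS t)"
    using ex_has_least_nat[of "\<lambda>s. s \<in> SS" s0 "\<lambda>s. card (crossing_set SS s)"] s0 by blast
  have "\<forall>t\<in>SS. card_le (crossing_set SS s) (crossing_set SS t)"
  proof
    fix t assume t: "t \<in> SS"
    obtain f where "f ` crossing_set SS s \<subseteq> crossing_set SS t" "inj_on f (crossing_set SS s)"
      using card_le_inj[OF cross_finite[OF s] cross_finite[OF t]] m t by blast
    then show "card_le (crossing_set SS s) (crossing_set SS t)" by (auto simp: card_le_def)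
  qed
  then have "s \<in> O_set V E PP" using s O_eq by auto
  then show ?thesis by blast
qed

end


lemma reach_map:
  assumes e: "\<forall>x\<in>S. \<forall>y\<in>S. E x y \<longrightarrow> E' (\<phi> x) (\<phi> y)" and r: "reach S E x y"
  shows "reach (\<phi> ` S) E' (\<phi> x) (\<phi> y)"
proof -
  have "(\<lambda>u v. u \<in> S \<and> v \<in> S \<and> E u v)\<^sup>*\<^sup>* x y" using r by (simp add: reach_def)
  then show ?thesis
  proof (induction rule: rtranclp_induct)
    case base then show ?case by simp
  next
    case (step y z)
    then have "\<phi> y \<in> \<phi> ` S" "\<phi> z \<in> \<phi> ` S" "E' (\<phi> y) (\<phi> z)" using e by auto
    then show ?case using step.IH reach_step by fast
  qed
qed

lemma card_le_img1:
  assumes inj: "inj_on h (X \<union> Y)" and c: "card_le X Y"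
  shows "card_le (h ` X) (h ` Y)"
proof -
  obtain \<phi> where \<phi>: "inj_on \<phi> X" "\<phi> ` X \<subseteq> Y" using c by (auto simp: card_le_def)
  define \<psi> where "\<psi> = h \<circ> \<phi> \<circ> inv_into X h"
  have injX: "inj_on h X" using inj by (rule inj_on_subset) simp
  have injY: "inj_on h Y" using inj by (rule inj_on_subset) simp
  have "inj_on \<psi> (h ` X)"
  proof (rule inj_onI)
    fix a b assume a: "a \<in> h ` X" and b: "b \<in> h ` X" and eq: "\<psi> a = \<psi> b"
    have ia: "inv_into X h a \<in> X" and ib: "inv_into X h b \<in> X" using a b inv_into_into by metis+
    have "\<phi> (inv_into X h a) \<in> Y" "\<phi> (inv_into X h b) \<in> Y" using ia ib \<phi>(2) by auto
    then have "\<phi> (inv_into X h a) = \<phi> (inv_into X h b)" using eq injY by (auto simp: \<psi>_def inj_on_def)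
    then have "inv_into X h a = inv_into X h b" using \<phi>(1) ia ib by (auto simp: inj_on_def)
    then show "a = b" using a b f_inv_into_f by metis
  qed
  moreover have "\<psi> ` (h ` X) \<subseteq> h ` Y"
  proof
    fix z assume "z \<in> \<psi> ` (h ` X)"
    then obtain a where a: "a \<in> h ` X" "z = \<psi> a" by blast
    have "inv_into X h a \<in> X" using a(1) inv_into_into by metis
    then show "z \<in> h ` Y" using a(2) \<phi>(2) by (auto simp: \<psi>_def)
  qed
  ultimately show ?thesis by (auto simp: card_le_def)
qed

lemma card_le_img:
  assumes inj: "inj_on h (X \<union> Y)"
  shows "card_le (h ` X) (h ` Y) \<longleftrightarrow> card_le X Y"
proof
  assume c: "card_le (h ` X) (h ` Y)"
  have "inj_on (inv_into (X \<union> Y) h) (h ` X \<union> h ` Y)" by (rule inj_on_inv_into) auto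
  from card_le_img1[OF this c] show "card_le X Y"
    using inv_into_image_cancel[OF inj, of X] inv_into_image_cancel[OF inj, of Y] by simp
next
  assume "card_le X Y" then show "card_le (h ` X) (h ` Y)" by (rule card_le_img1[OF inj])
qed

locale iso =
  fixes f :: "'a \<Rightarrow> 'b" and V :: "'a set" and E and V' :: "'b set" and E'
  assumes bij: "bij_betw f V V'" and edge: "\<forall>x\<in>V. \<forall>y\<in>V. E x y \<longleftrightarrow> E' (f x) (f y)"
    and G: "graph V E" and G': "graph V' E'"
begin

abbreviation "D \<equiv> {s. fst s \<subseteq> V \<and> snd s \<subseteq> V}"

lemma inj: "inj_on f V" using bij by (simp add: bij_betw_def)
lemma fV: "f ` V = V'" using bij by (simp add: bij_betw_def)

lemma img_eq: "A \<subseteq> V \<Longrightarrow> B \<subseteq> V \<Longrightarrow> f ` A = f ` B \<longleftrightarrow> A = B"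
  using inj_on_image_eq_iff[OF inj] by blast

lemma img_sub: "A \<subseteq> V \<Longrightarrow> B \<subseteq> V \<Longrightarrow> f ` A \<subseteq> f ` B \<longleftrightarrow> A \<subseteq> B"
proof
  assume "A \<subseteq> V" "B \<subseteq> V" "f ` A \<subseteq> f ` B"
  then show "A \<subseteq> B" using inj_on_image_mem_iff[OF inj] by blast
qed auto

lemma img_diff: "A \<subseteq> V \<Longrightarrow> B \<subseteq> V \<Longrightarrow> f ` A - f ` B = f ` (A - B)"
  using inj_on_image_set_diff[OF inj] by (metis Diff_subset subset_trans)

lemma img_int: "A \<subseteq> V \<Longrightarrow> B \<subseteq> V \<Longrightarrow> f ` A \<inter> f ` B = f ` (A \<inter> B)"
  using inj_on_image_Int[OF inj] by metis

lemma inj_h: "inj_on (map_sep f) D"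
proof (rule inj_onI)
  fix s t assume "s \<in> D" "t \<in> D" "map_sep f s = map_sep f t"
  then show "s = t" using img_eq by (simp add: map_sep_def) (metis prod.expand)
qed

lemma rev_h: "rev_sep (map_sep f s) = map_sep f (rev_sep s)"
  by (simp add: rev_sep_def map_sep_def)

lemma rev_D: "s \<in> D \<Longrightarrow> rev_sep s \<in> D" by (simp add: rev_sep_def)

lemma sep_D: "is_sep V E s \<Longrightarrow> s \<in> D" by (auto simp: is_sep_def)

lemma sep_iff: assumes s: "s \<in> D" shows "is_sep V' E' (map_sep f s) \<longleftrightarrow> is_sep V E s"
proof -
  obtain A B where AB: "s = (A, B)" "A \<subseteq> V" "B \<subseteq> V" using s by (cases s) auto
  have u: "f ` A \<union> f ` B = V' \<longleftrightarrow> A \<union> B = V"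
    using img_eq[of "A \<union> B" V] AB fV by (simp add: image_Un)
  have d1: "f ` A - f ` B = f ` (A - B)" and d2: "f ` B - f ` A = f ` (B - A)" using img_diff AB by auto
  have e1: "(\<exists>x\<in>f ` (A - B). \<exists>y\<in>f ` (B - A). E' x y) \<longleftrightarrow> (\<exists>x\<in>A - B. \<exists>y\<in>B - A. E' (f x) (f y))"
    by blast
  have e2: "\<And>x y. x \<in> A - B \<Longrightarrow> y \<in> B - A \<Longrightarrow> E' (f x) (f y) \<longleftrightarrow> E x y"
    using edge AB by blast
  have e: "(\<exists>x\<in>f ` (A - B). \<exists>y\<in>f ` (B - A). E' x y) \<longleftrightarrow> (\<exists>x\<in>A - B. \<exists>y\<in>B - A. E x y)"
    unfolding e1 using e2 by blast
  show ?thesis unfolding AB(1) is_sep_def map_sep_def fst_conv snd_conv d1 d2 e u ..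
qed

lemma ord_eq: assumes s: "s \<in> D" shows "sep_ord (map_sep f s) = sep_ord s"
proof -
  obtain A B where AB: "s = (A, B)" "A \<subseteq> V" "B \<subseteq> V" using s by (cases s) auto
  have i: "f ` A \<inter> f ` B = f ` (A \<inter> B)" using img_int AB by auto
  have inj': "inj_on f (A \<inter> B)" using inj AB by (meson inf.coboundedI1 inj_on_subset)
  show ?thesis unfolding AB(1) sep_ord_def map_sep_def fst_conv snd_conv i
    using finite_image_iff[OF inj'] card_image[OF inj'] by simp
qed

lemma le_iff: "s \<in> D \<Longrightarrow> t \<in> D \<Longrightarrow> sep_le (map_sep f s) (map_sep f t) \<longleftrightarrow> sep_le s t"
  unfolding sep_le_def map_sep_def using img_sub by auto

lemma nested_iff: "s \<in> D \<Longrightarrow> t \<in> D \<Longrightarrow> nested (map_sep f s) (map_sep f t) \<longleftrightarrow> nested s t"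
  unfolding nested_def rev_h using le_iff rev_D by simp

lemma crosses_iff: "s \<in> D \<Longrightarrow> t \<in> D \<Longrightarrow> crosses (map_sep f s) (map_sep f t) \<longleftrightarrow> crosses s t"
  unfolding crosses_def using nested_iff by simp

lemma mem_iff: "P \<subseteq> D \<Longrightarrow> s \<in> D \<Longrightarrow> map_sep f s \<in> map_sep f ` P \<longleftrightarrow> s \<in> P"
  using inj_on_image_mem_iff[OF inj_h] by blast

lemma dist_iff:
  assumes PP: "\<forall>P\<in>PP. P \<subseteq> D" and s: "s \<in> D"
  shows "distinguishes_some ((\<lambda>P. map_sep f ` P) ` PP) (map_sep f s) \<longleftrightarrow> distinguishes_some PP s"
proof -
  have "\<And>P Q. P \<in> PP \<Longrightarrow> Q \<in> PP \<Longrightarrow>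
     distinguishes (map_sep f s) (map_sep f ` P) (map_sep f ` Q) \<longleftrightarrow> distinguishes s P Q"
    unfolding distinguishes_def rev_h using mem_iff PP s rev_D by simp
  then show ?thesis unfolding distinguishes_some_def by auto
qed

lemma surj_sep: assumes "is_sep V' E' s'" shows "\<exists>s\<in>D. s' = map_sep f s"
proof -
  define g where "g = inv_into V f"
  have sub: "fst s' \<subseteq> V'" "snd s' \<subseteq> V'" using assms by (auto simp: is_sep_def)
  have fg: "\<And>A. A \<subseteq> V' \<Longrightarrow> f ` g ` A = A"
  proof -
    fix A assume "A \<subseteq> V'"
    then have "\<forall>y\<in>A. f (g y) = y" unfolding g_def using fV f_inv_into_f[of _ f V] by blast
    then show "f ` g ` A = A" by force
  qed
  have gV: "\<And>A. A \<subseteq> V' \<Longrightarrow> g ` A \<subseteq> V"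
  proof
    fix A z assume A: "A \<subseteq> V'" and z: "z \<in> g ` A"
    then obtain y where y: "y \<in> A" "z = g y" by blast
    then have "y \<in> f ` V" using A fV by blast
    then show "z \<in> V" unfolding y(2) g_def by (rule inv_into_into)
  qed
  have a: "(g ` fst s', g ` snd s') \<in> D" using gV[OF sub(1)] gV[OF sub(2)] by simp
  have b: "s' = map_sep f (g ` fst s', g ` snd s')"
    unfolding map_sep_def fst_conv snd_conv fg[OF sub(1)] fg[OF sub(2)] by simp
  show ?thesis using a b by blast
qed

lemma conn_iff: assumes S: "S \<subseteq> V" shows "connected_in E' (f ` S) \<longleftrightarrow> connected_in E S"
proof
  assume c: "connected_in E S"
  have e: "\<forall>x\<in>S. \<forall>y\<in>S. E x y \<longrightarrow> E' (f x) (f y)" using edge S by blast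
  show "connected_in E' (f ` S)" unfolding connected_in_reach
  proof (intro conjI ballI)
    show "f ` S \<noteq> {}" using c by (auto simp: connected_in_def)
  next
    fix a b assume "a \<in> f ` S" "b \<in> f ` S"
    then obtain x y where xy: "x \<in> S" "y \<in> S" "a = f x" "b = f y" by blast
    then have "reach S E x y" using c unfolding connected_in_reach by blast
    then have "reach (f ` S) E' (f x) (f y)" by (rule reach_map[where \<phi>=f and S=S and E=E and E'=E', OF e])
    then show "reach (f ` S) E' a b" using xy by simp
  qed
next
  assume c: "connected_in E' (f ` S)"
  define g where "g = inv_into V f"
  have gf: "\<And>x. x \<in> V \<Longrightarrow> g (f x) = x" using inj by (simp add: g_def)
  have e: "\<forall>x\<in>f ` S. \<forall>y\<in>f ` S. E' x y \<longrightarrow> E (g x) (g y)"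
  proof (intro ballI impI)
    fix a b assume "a \<in> f ` S" "b \<in> f ` S" "E' a b"
    then obtain x y where xy: "x \<in> S" "y \<in> S" "a = f x" "b = f y" by blast
    then have xV: "x \<in> V" "y \<in> V" using S by auto
    then have "E x y" using edge \<open>E' a b\<close> xy by blast
    then show "E (g a) (g b)" using xy(3,4) gf[OF xV(1)] gf[OF xV(2)] by simp
  qed
  have gS: "g ` f ` S = S" using inv_into_image_cancel[OF inj S] by (simp add: g_def)
  show "connected_in E S" unfolding connected_in_reach
  proof (intro conjI ballI)
    show "S \<noteq> {}" using c by (auto simp: connected_in_def)
  next
    fix x y assume "x \<in> S" "y \<in> S"
    then have "reach (f ` S) E' (f x) (f y)" using c unfolding connected_in_reach by blast
    then have r: "reach (g ` f ` S) E (g (f x)) (g (f y))" by (rule reach_map[where \<phi>=g and S="f ` S" and E=E' and E'=E, OF e])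
    have "x \<in> V" "y \<in> V" using S \<open>x \<in> S\<close> \<open>y \<in> S\<close> by auto
    then show "reach S E x y" using r gS gf by simp
  qed
qed

lemma lc_iff: assumes s: "s \<in> D" shows "left_connected E' (map_sep f s) \<longleftrightarrow> left_connected E s"
proof -
  have "fst (map_sep f s) - snd (map_sep f s) = f ` (fst s - snd s)"
    using img_diff s by (simp add: map_sep_def)
  moreover have "fst s - snd s \<subseteq> V" using s by auto
  ultimately show ?thesis unfolding left_connected_def using conn_iff by simp
qed

lemma Rset_img:
  assumes PP: "\<forall>P\<in>PP. P \<subseteq> D"
  shows "{s'. is_sep V' E' s' \<and> distinguishes_some ((\<lambda>P. map_sep f ` P) ` PP) s'}
       = map_sep f ` {s. is_sep V E s \<and> distinguishes_some PP s}"
proof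
  show "{s'. is_sep V' E' s' \<and> distinguishes_some ((\<lambda>P. map_sep f ` P) ` PP) s'}
       \<subseteq> map_sep f ` {s. is_sep V E s \<and> distinguishes_some PP s}"
  proof
    fix s' assume s': "s' \<in> {s'. is_sep V' E' s' \<and> distinguishes_some ((\<lambda>P. map_sep f ` P) ` PP) s'}"
    then obtain s where s: "s \<in> D" "s' = map_sep f s" using surj_sep by blast
    then show "s' \<in> map_sep f ` {s. is_sep V E s \<and> distinguishes_some PP s}"
      using s' sep_iff dist_iff[OF PP] by auto
  qed
next
  show "map_sep f ` {s. is_sep V E s \<and> distinguishes_some PP s}
     \<subseteq> {s'. is_sep V' E' s' \<and> distinguishes_some ((\<lambda>P. map_sep f ` P) ` PP) s'}"
    using sep_iff dist_iff[OF PP] sep_D by auto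
qed

lemma kappa_eq:
  assumes PP: "\<forall>P\<in>PP. P \<subseteq> D"
  shows "kappa V' E' ((\<lambda>P. map_sep f ` P) ` PP) = kappa V E PP"
proof -
  have "sep_ord ` map_sep f ` {s. is_sep V E s \<and> distinguishes_some PP s}
      = sep_ord ` {s. is_sep V E s \<and> distinguishes_some PP s}"
    unfolding image_image using ord_eq sep_D by (intro image_cong) auto
  then show ?thesis unfolding kappa_def Rset_img[OF PP] by simp
qed

lemma R_img:
  assumes PP: "\<forall>P\<in>PP. P \<subseteq> D"
  shows "R V' E' \<kappa> ((\<lambda>P. map_sep f ` P) ` PP) = map_sep f ` R V E \<kappa> PP"
proof
  show "R V' E' \<kappa> ((\<lambda>P. map_sep f ` P) ` PP) \<subseteq> map_sep f ` R V E \<kappa> PP"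
  proof
    fix s' assume s': "s' \<in> R V' E' \<kappa> ((\<lambda>P. map_sep f ` P) ` PP)"
    then have "is_sep V' E' s'" by (simp add: R_def)
    then obtain s where s: "s \<in> D" "s' = map_sep f s" using surj_sep by blast
    then show "s' \<in> map_sep f ` R V E \<kappa> PP"
      using s' sep_iff dist_iff[OF PP] ord_eq by (auto simp: R_def)
  qed
next
  show "map_sep f ` R V E \<kappa> PP \<subseteq> R V' E' \<kappa> ((\<lambda>P. map_sep f ` P) ` PP)"
    using sep_iff dist_iff[OF PP] sep_D ord_eq by (auto simp: R_def)
qed

lemma Rlc_img:
  assumes PP: "\<forall>P\<in>PP. P \<subseteq> D"
  shows "R_lc V' E' \<kappa> ((\<lambda>P. map_sep f ` P) ` PP) = map_sep f ` R_lc V E \<kappa> PP"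
proof -
  have "\<And>s. s \<in> R V E \<kappa> PP \<Longrightarrow> s \<in> D" using sep_D by (auto simp: R_def)
  then show ?thesis unfolding R_lc_def R_img[OF PP] using lc_iff by auto
qed

lemma cross_img:
  assumes S: "S \<subseteq> D" and s: "s \<in> D"
  shows "crossing_set (map_sep f ` S) (map_sep f s) = map_sep f ` crossing_set S s"
proof
  show "crossing_set (map_sep f ` S) (map_sep f s) \<subseteq> map_sep f ` crossing_set S s"
  proof
    fix t' assume "t' \<in> crossing_set (map_sep f ` S) (map_sep f s)"
    then obtain t where t: "t \<in> S" "t' = map_sep f t" "crosses (map_sep f t) (map_sep f s)"
      by (auto simp: crossing_set_def)
    then have "crosses t s" using crosses_iff S s by blast
    then show "t' \<in> map_sep f ` crossing_set S s" using t by (auto simp: crossing_set_def)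
  qed
next
  show "map_sep f ` crossing_set S s \<subseteq> crossing_set (map_sep f ` S) (map_sep f s)"
  proof
    fix t' assume "t' \<in> map_sep f ` crossing_set S s"
    then obtain t where t: "t \<in> S" "t' = map_sep f t" "crosses t s"
      by (auto simp: crossing_set_def)
    then have "crosses (map_sep f t) (map_sep f s)" using crosses_iff S s by blast
    then show "t' \<in> crossing_set (map_sep f ` S) (map_sep f s)" using t by (auto simp: crossing_set_def)
  qed
qed

lemma O_img:
  assumes PP: "\<forall>P\<in>PP. P \<subseteq> D"
  shows "O_set V' E' ((\<lambda>P. map_sep f ` P) ` PP) = map_sep f ` O_set V E PP"
proof -
  define S where "S = R_lc V E (kappa V E PP) PP"
  have S': "R_lc V' E' (kappa V' E' ((\<lambda>P. map_sep f ` P) ` PP)) ((\<lambda>P. map_sep f ` P) ` PP) = map_sep f ` S"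
    unfolding kappa_eq[OF PP] S_def by (rule Rlc_img[OF PP])
  have SD: "S \<subseteq> D"
  proof
    fix s assume "s \<in> S"
    then have "is_sep V E s" by (simp add: S_def R_lc_def R_def)
    then show "s \<in> D" by (rule sep_D)
  qed
  have cr: "\<And>s. s \<in> S \<Longrightarrow> crossing_set (map_sep f ` S) (map_sep f s) = map_sep f ` crossing_set S s"
    using cross_img[OF SD] SD by blast
  have csub: "\<And>s. crossing_set S s \<subseteq> D" using SD by (auto simp: crossing_set_def)
  have cl: "\<And>s t. s \<in> S \<Longrightarrow> t \<in> S \<Longrightarrow>
     card_le (crossing_set (map_sep f ` S) (map_sep f s)) (crossing_set (map_sep f ` S) (map_sep f t))
     \<longleftrightarrow> card_le (crossing_set S s) (crossing_set S t)"
  proof -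
    fix s t assume "s \<in> S" "t \<in> S"
    have "inj_on (map_sep f) (crossing_set S s \<union> crossing_set S t)"
      by (rule inj_on_subset[OF inj_h]) (use csub in blast)
    then have "card_le (map_sep f ` crossing_set S s) (map_sep f ` crossing_set S t) \<longleftrightarrow>
       card_le (crossing_set S s) (crossing_set S t)" by (rule card_le_img)
    then show "?thesis s t" using cr[OF \<open>s \<in> S\<close>] cr[OF \<open>t \<in> S\<close>] by simp
  qed
  have O1: "O_set V E PP = {s \<in> S. \<forall>t\<in>S. card_le (crossing_set S s) (crossing_set S t)}"
    by (simp add: O_set_def Let_def S_def)
  have O2: "O_set V' E' ((\<lambda>P. map_sep f ` P) ` PP) = {s \<in> map_sep f ` S. \<forall>t\<in>map_sep f ` S.
      card_le (crossing_set (map_sep f ` S) s) (crossing_set (map_sep f ` S) t)}"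
    unfolding O_set_def Let_def S' by simp
  show ?thesis unfolding O1 O2
  proof
    show "{s \<in> map_sep f ` S. \<forall>t\<in>map_sep f ` S. card_le (crossing_set (map_sep f ` S) s) (crossing_set (map_sep f ` S) t)}
      \<subseteq> map_sep f ` {s \<in> S. \<forall>t\<in>S. card_le (crossing_set S s) (crossing_set S t)}"
    proof
      fix s' assume s': "s' \<in> {s \<in> map_sep f ` S. \<forall>t\<in>map_sep f ` S. card_le (crossing_set (map_sep f ` S) s) (crossing_set (map_sep f ` S) t)}"
      then obtain s where s: "s \<in> S" "s' = map_sep f s" by blast
      have "\<forall>t\<in>S. card_le (crossing_set S s) (crossing_set S t)"
      proof
        fix t assume t: "t \<in> S"
        then have "map_sep f t \<in> map_sep f ` S" by blast
        moreover have "\<forall>t\<in>map_sep f ` S. card_le (crossing_set (map_sep f ` S) s') (crossing_set (map_sep f ` S) t)"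
          using s' by blast
        ultimately have "card_le (crossing_set (map_sep f ` S) s') (crossing_set (map_sep f ` S) (map_sep f t))"
          by blast
        then have "card_le (crossing_set (map_sep f ` S) (map_sep f s)) (crossing_set (map_sep f ` S) (map_sep f t))"
          using s(2) by simp
        then show "card_le (crossing_set S s) (crossing_set S t)" using cl[OF s(1) t] by simp
      qed
      then show "s' \<in> map_sep f ` {s \<in> S. \<forall>t\<in>S. card_le (crossing_set S s) (crossing_set S t)}"
        using s by blast
    qed
  next
    show "map_sep f ` {s \<in> S. \<forall>t\<in>S. card_le (crossing_set S s) (crossing_set S t)}
      \<subseteq> {s \<in> map_sep f ` S. \<forall>t\<in>map_sep f ` S. card_le (crossing_set (map_sep f ` S) s) (crossing_set (map_sep f ` S) t)}"
    proof
      fix s' assume "s' \<in> map_sep f ` {s \<in> S. \<forall>t\<in>S. card_le (crossing_set S s) (crossing_set S t)}"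
      then obtain s where s: "s \<in> S" "s' = map_sep f s" "\<forall>t\<in>S. card_le (crossing_set S s) (crossing_set S t)" by blast
      have "\<forall>t'\<in>map_sep f ` S. card_le (crossing_set (map_sep f ` S) s') (crossing_set (map_sep f ` S) t')"
      proof
        fix t' assume "t' \<in> map_sep f ` S"
        then obtain t where t: "t \<in> S" "t' = map_sep f t" by blast
        then show "card_le (crossing_set (map_sep f ` S) s') (crossing_set (map_sep f ` S) t')"
          using cl[OF s(1) t(1)] s by simp
      qed
      then show "s' \<in> {s \<in> map_sep f ` S. \<forall>t\<in>map_sep f ` S. card_le (crossing_set (map_sep f ` S) s) (crossing_set (map_sep f ` S) t)}"
        using s by blast
    qed
  qed
qed
end

theorem lemma2p8:
  fixes V :: "'a set" and E :: "'a \<Rightarrow> 'a \<Rightarrow> bool"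
    and \<P> :: "'a sep set set" and k :: nat
  assumes G: "graph V E"
    and kappa: "kappa V E \<P> = enat k"
    and profs: "\<forall>P \<in> \<P>. l_profile V E (k + 1) P \<and> robust V E P \<and> principal_profile P"
    and ws: "well_separable V E \<P>"
    and ne: "R V E (enat k) \<P> \<noteq> {}"
  shows "nested_set (O_set V E \<P>)
     \<and> (\<forall>(V' :: 'b set) E' \<P>' f. graph V' E' \<and> graph_iso f V E V' E' \<and>
           \<P>' = (\<lambda>P. map_sep f ` P) ` \<P> \<longrightarrow> O_set V' E' \<P>' = map_sep f ` O_set V E \<P>)
     \<and> O_set V E \<P> \<noteq> {}"
proof -
  interpret setting V E \<P> k using G kappa profs ws by unfold_locales
  have A: "nested_set (O_set V E \<P>)" by (rule O_nested)
  have C: "O_set V E \<P> \<noteq> {}" using O_ne ne by blast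
  have PPD: "\<forall>P\<in>\<P>. P \<subseteq> {s. fst s \<subseteq> V \<and> snd s \<subseteq> V}"
  proof (intro ballI subsetI)
    fix P s assume P: "P \<in> \<P>" and s: "s \<in> P"
    have "is_sep V E s" using inQ(1)[OF P s] .
    then show "s \<in> {s. fst s \<subseteq> V \<and> snd s \<subseteq> V}" by (auto simp: is_sep_def)
  qed
  have B: "\<forall>(V' :: 'b set) E' \<P>' f. graph V' E' \<and> graph_iso f V E V' E' \<and>
           \<P>' = (\<lambda>P. map_sep f ` P) ` \<P> \<longrightarrow> O_set V' E' \<P>' = map_sep f ` O_set V E \<P>"
  proof (intro allI impI)
    fix V' :: "'b set" and E' \<P>' and f :: "'a \<Rightarrow> 'b"
    assume a: "graph V' E' \<and> graph_iso f V E V' E' \<and> \<P>' = (\<lambda>P. map_sep f ` P) ` \<P>"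
    have "iso f V E V' E'" using a G by (unfold_locales) (auto simp: graph_iso_def)
    then have "O_set V' E' ((\<lambda>P. map_sep f ` P) ` \<P>) = map_sep f ` O_set V E \<P>"
      using iso.O_img PPD by blast
    then show "O_set V' E' \<P>' = map_sep f ` O_set V E \<P>" using a by simp
  qed
  show ?thesis using A B C by blast
qed

end
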